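(* Let $n\ge 2$ and let $\mathcal{H}^n=\{(y_0,y_1,\dots,y_n)\in\mathbb{R}^{n+1}\mid -y_0^2+y_1^2+\dots+y_n^2=-1,\ y_0>0\}$ be the hyperbolic space modelled as a hyperboloid in Minkowski space $M^{n+1}$, with the Riemannian metric induced from the Lorentzian metric $-dy_0^2+dy_1^2+\dots+dy_n^2$. Let $h:\mathbb{R}^{n-1}\to\mathbb{C}$ be a non-constant function harmonic with respect to the Euclidean metric on $\mathbb{R}^{n-1}$, let $r\ge 1$ be an integer, and let $p_r:\mathbb{R}^+\to\mathbb{C}$ be given by $p_r(t)=(a_r+b_r t^{n-1})\cdot\log(t)^{r-1}$, where $(a_r,b_r)\in\mathbb{C}^2$ is non-zero. Then the function $f:\mathcal{H}^n\to\mathbb{C}$ given by $$f(y_0,y_1,\dots,y_n)=p_r\Bigl(\frac{2\sqrt{y_0^2-y_1^2-\dots-y_n^2}}{y_0+y_1}\Bigr)\cdot h\Bigl(\frac{2y_2}{y_0+y_1},\dots,\frac{2y_n}{y_0+y_1}\Bigr)$$ is proper $r$-harmonic on $\mathcal{H}^n$.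
   Context: For a Riemannian manifold $(M,g)$ the Laplace–Beltrami operator (tension field) acts on complex-valued functions by $\tau(f)=\sum_{i,j}\frac{1}{\sqrt{|g|}}\frac{\partial}{\partial x_j}\bigl(g^{ij}\sqrt{|g|}\frac{\partial f}{\partial x_i}\bigr)$ in local coordinates. Iterates: $\tau^0(f)=f$, $\tau^r(f)=\tau(\tau^{r-1}(f))$. A function $f$ is $r$-harmonic if $\tau^r(f)=0$, and proper $r$-harmonic if moreover $\tau^{r-1}(f)$ does not vanish identically. *)

theory Defs
  imports "HOL-Analysis.Analysis"
begin

definition pd :: "'k::finite \<Rightarrow> (real^'k \<Rightarrow> complex) \<Rightarrow> real^'k \<Rightarrow> complex" where
  "pd i F x = vector_derivative (\<lambda>s. F (x + s *\<^sub>R axis i 1)) (at 0)"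

definition pdv :: "'k::finite \<Rightarrow> (real^'k \<Rightarrow> 'b::real_normed_vector) \<Rightarrow> real^'k \<Rightarrow> 'b" where
  "pdv i F x = vector_derivative (\<lambda>s. F (x + s *\<^sub>R axis i 1)) (at 0)"

definition lb_coord :: "(real^'k \<Rightarrow> real^'k^'k) \<Rightarrow> (real^'k::finite \<Rightarrow> complex) \<Rightarrow> real^'k \<Rightarrow> complex" where
  "lb_coord g F x =
     (\<Sum>i\<in>UNIV. \<Sum>j\<in>UNIV.
        complex_of_real (1 / sqrt \<bar>det (g x)\<bar>) *
        pd j (\<lambda>z. complex_of_real (matrix_inv (g z) $ i $ j * sqrt \<bar>det (g z)\<bar>) * pd i F z) x)"

definition euclid_harmonic :: "(real^'k::finite \<Rightarrow> complex) \<Rightarrow> bool" where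
  "euclid_harmonic h \<longleftrightarrow>
     (\<forall>x. h differentiable (at x)) \<and>
     (\<forall>i x. pd i h differentiable (at x)) \<and>
     (\<forall>i j. continuous_on UNIV (pd j (pd i h))) \<and>
     (\<forall>x. (\<Sum>i\<in>UNIV. pd i (pd i h) x) = 0)"

text \<open>Minkowski space M^{k+1}: points (y0, w) with w = (y1,...,yk) indexed by 'k,
  Lorentzian form -dy0^2 + dy1^2 + ... + dyk^2.\<close>
definition mink :: "real \<times> (real^'k::finite) \<Rightarrow> real \<times> (real^'k) \<Rightarrow> real" where
  "mink u v = - fst u * fst v + (\<Sum>i\<in>UNIV. snd u $ i * snd v $ i)"

definition hyperboloid :: "(real \<times> (real^'k::finite)) set" where
  "hyperboloid = {(y0, w). - (y0 ^ 2) + (\<Sum>i\<in>UNIV. (w $ i)^2) = -1 \<and> y0 > 0}"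

text \<open>Global chart of the hyperboloid: (y1,...,yk) maps to (sqrt(1+|y|^2), y1,...,yk);
  its inverse is the projection forgetting y0.\<close>
definition hchart :: "real^'k::finite \<Rightarrow> real \<times> (real^'k)" where
  "hchart x = (sqrt (1 + (\<Sum>i\<in>UNIV. (x $ i)^2)), x)"

definition hmetric :: "real^'k::finite \<Rightarrow> real^'k^'k" where
  "hmetric x = (\<chi> i j. mink (pdv i hchart x) (pdv j hchart x))"

text \<open>Tension field (Laplace--Beltrami operator) on the hyperboloid, acting on
  complex-valued functions on it (only the values on the hyperboloid matter).\<close>
definition tau_H :: "(real \<times> (real^'k::finite) \<Rightarrow> complex) \<Rightarrow> (real \<times> (real^'k) \<Rightarrow> complex)" where
  "tau_H F y = lb_coord hmetric (F \<circ> hchart) (snd y)"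

definition proper_r_harmonic_H :: "nat \<Rightarrow> (real \<times> (real^'k::finite) \<Rightarrow> complex) \<Rightarrow> bool" where
  "proper_r_harmonic_H r f \<longleftrightarrow>
     (\<forall>y\<in>hyperboloid. (tau_H ^^ r) f y = 0) \<and>
     \<not> (\<forall>y\<in>hyperboloid. (tau_H ^^ (r - 1)) f y = 0)"

end

theory Submission
  imports Defs "HOL-Computational_Algebra.Polynomial"
begin

lemma pd_eq_pdv: "pd i F x = pdv i F x" by (simp add: pd_def pdv_def)

lemma pdv_hasd:
  assumes "(F has_derivative F') (at x)"
  shows "pdv i F x = F' (axis i 1)"
proof -
  have l: "((\<lambda>s. x + s *\<^sub>R axis i (1::real)) has_derivative (\<lambda>s. s *\<^sub>R axis i 1)) (at 0)"
    by (auto intro!: derivative_eq_intros)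
  have F: "(F has_derivative F') (at (x + 0 *\<^sub>R axis i 1))" using assms by simp
  have "((\<lambda>s. F (x + s *\<^sub>R axis i 1)) has_derivative (\<lambda>s. F' (s *\<^sub>R axis i 1))) (at 0)"
    using has_derivative_compose[OF l F] .
  moreover have "(\<lambda>s. F' (s *\<^sub>R axis i 1)) = (\<lambda>s. s *\<^sub>R F' (axis i 1))"
    using has_derivative_linear[OF assms] by (simp add: linear_scale)
  ultimately have "((\<lambda>s. F (x + s *\<^sub>R axis i 1)) has_vector_derivative F' (axis i 1)) (at 0)"
    by (simp add: has_vector_derivative_def)
  then show ?thesis unfolding pdv_def by (rule vector_derivative_at)
qed

lemma pd_hasd:
  assumes "(F has_derivative F') (at x)"
  shows "pd i F x = F' (axis i 1)"
  by (simp add: pd_eq_pdv pdv_hasd[OF assms])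

lemma pd_frechet:
  assumes "F differentiable (at x)"
  shows "pd i F x = frechet_derivative F (at x) (axis i 1)"
  using pd_hasd frechet_derivative_works assms by blast

lemma pd_add:
  assumes "A differentiable (at x)" "B differentiable (at x)"
  shows "pd i (\<lambda>x. A x + B x) x = pd i A x + pd i B x"
proof -
  have a: "(A has_derivative frechet_derivative A (at x)) (at x)"
   and b: "(B has_derivative frechet_derivative B (at x)) (at x)"
    using assms frechet_derivative_works by blast+
  show ?thesis
    using pd_hasd[OF has_derivative_add[OF a b]] pd_hasd[OF a] pd_hasd[OF b] by simp
qed

lemma pd_mult:
  fixes A B :: "real^'k::finite \<Rightarrow> complex"
  assumes "A differentiable (at x)" "B differentiable (at x)"
  shows "pd i (\<lambda>x. A x * B x) x = A x * pd i B x + pd i A x * B x"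
proof -
  have a: "(A has_derivative frechet_derivative A (at x)) (at x)"
   and b: "(B has_derivative frechet_derivative B (at x)) (at x)"
    using assms frechet_derivative_works by blast+
  show ?thesis
    using pd_hasd[OF has_derivative_mult[OF a b]] pd_hasd[OF a] pd_hasd[OF b] by simp
qed

lemma pd_const: "pd i (\<lambda>x. c) x = 0"
proof -
  have "((\<lambda>x. c) has_derivative (\<lambda>_. 0)) (at x)" by simp
  from pd_hasd[OF this] show ?thesis by simp
qed

lemma pd_sum:
  fixes A :: "'l \<Rightarrow> real^'k::finite \<Rightarrow> complex"
  assumes "finite L" "\<And>l. l \<in> L \<Longrightarrow> A l differentiable (at x)"
  shows "pd i (\<lambda>x. \<Sum>l\<in>L. A l x) x = (\<Sum>l\<in>L. pd i (A l) x)"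
proof -
  have a: "\<And>l. l \<in> L \<Longrightarrow> (A l has_derivative frechet_derivative (A l) (at x)) (at x)"
    using assms frechet_derivative_works by blast
  show ?thesis
    using pd_hasd[OF has_derivative_sum[OF a]] pd_hasd[OF a] by simp
qed

lemma pd_real:
  fixes R :: "real^'k::finite \<Rightarrow> real"
  assumes "(R has_derivative R') (at x)"
  shows "pd i (\<lambda>x. complex_of_real (R x)) x = complex_of_real (R' (axis i 1))"
proof -
  have "((\<lambda>x. complex_of_real (R x)) has_derivative (\<lambda>v. complex_of_real (R' v))) (at x)"
    using has_derivative_compose[OF assms bounded_linear_imp_has_derivative[OF bounded_linear_of_real]] .
  then show ?thesis by (rule pd_hasd)
qed

lemma pd_chain1:
  fixes T :: "real^'k::finite \<Rightarrow> real" and Q :: "real \<Rightarrow> complex"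
  assumes "(T has_derivative T') (at x)" "(Q has_vector_derivative q) (at (T x))"
  shows "pd i (\<lambda>x. Q (T x)) x = q * pd i (\<lambda>x. complex_of_real (T x)) x"
proof -
  have d: "((\<lambda>x. Q (T x)) has_derivative (\<lambda>v. T' v *\<^sub>R q)) (at x)"
    using has_derivative_compose[OF assms(1) assms(2)[unfolded has_vector_derivative_def]] .
  have "pd i (\<lambda>x. Q (T x)) x = T' (axis i 1) *\<^sub>R q" by (rule pd_hasd[OF d])
  then show ?thesis using pd_real[OF assms(1)]
    by (simp add: scaleR_conv_of_real mult.commute)
qed

lemma linear_cart_expand:
  fixes f :: "real^'m::finite \<Rightarrow> complex"
  assumes "linear f"
  shows "f v = (\<Sum>l\<in>UNIV. complex_of_real (v$l) * f (axis l 1))"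
proof -
  have "f v = f (\<Sum>l\<in>UNIV. (v$l) *\<^sub>R axis l 1)"
    using basis_expansion[of v] by (simp add: scalar_mult_eq_scaleR)
  also have "\<dots> = (\<Sum>l\<in>UNIV. (v$l) *\<^sub>R f (axis l 1))"
    using assms by (simp add: linear_sum linear_scale)
  finally show ?thesis by (simp add: scaleR_conv_of_real)
qed

lemma pd_chainZ:
  fixes Z :: "real^'k::finite \<Rightarrow> real^'m::finite" and h :: "real^'m \<Rightarrow> complex"
  assumes "Z differentiable (at x)" "h differentiable (at (Z x))"
  shows "pd i (\<lambda>x. h (Z x)) x = (\<Sum>l\<in>UNIV. pd l h (Z x) * pd i (\<lambda>x. complex_of_real (Z x $ l)) x)"
proof -
  define Z' where "Z' = frechet_derivative Z (at x)"
  define h' where "h' = frechet_derivative h (at (Z x))"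
  have z: "(Z has_derivative Z') (at x)" using assms Z'_def frechet_derivative_works by blast
  have hh: "(h has_derivative h') (at (Z x))" using assms h'_def frechet_derivative_works by blast
  have c: "((\<lambda>x. h (Z x)) has_derivative (\<lambda>v. h' (Z' v))) (at x)"
    using has_derivative_compose[OF z hh] .
  have zl: "((\<lambda>x. Z x $ l) has_derivative (\<lambda>v. Z' v $ l)) (at x)" for l
    using bounded_linear.has_derivative[OF bounded_linear_vec_nth z] .
  have "pd i (\<lambda>x. h (Z x)) x = h' (Z' (axis i 1))" using pd_hasd[OF c] .
  also have "\<dots> = (\<Sum>l\<in>UNIV. complex_of_real (Z' (axis i 1) $ l) * h' (axis l 1))"
    using linear_cart_expand[OF has_derivative_linear[OF hh]] .
  finally show ?thesis using pd_hasd[OF hh] pd_real[OF zl]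
    by (simp add: mult.commute)
qed



definition gi :: "real^'k::finite \<Rightarrow> 'k \<Rightarrow> 'k \<Rightarrow> real" where
  "gi x i j = (if i = j then 1 else 0) + x$i * x$j"

definition Gam :: "(real^'k::finite \<Rightarrow> complex) \<Rightarrow> (real^'k \<Rightarrow> complex) \<Rightarrow> real^'k \<Rightarrow> complex" where
  "Gam F G x = (\<Sum>i\<in>UNIV. \<Sum>j\<in>UNIV. complex_of_real (gi x i j) * pd i F x * pd j G x)"

definition Lap :: "(real^'k::finite \<Rightarrow> complex) \<Rightarrow> real^'k \<Rightarrow> complex" where
  "Lap F x = (\<Sum>i\<in>UNIV. \<Sum>j\<in>UNIV. complex_of_real (gi x i j) * pd j (pd i F) x)
     + of_nat CARD('k) * (\<Sum>i\<in>UNIV. complex_of_real (x$i) * pd i F x)"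

definition C2 :: "(real^'k::finite \<Rightarrow> complex) \<Rightarrow> bool" where
  "C2 F \<longleftrightarrow> (\<forall>x. F differentiable (at x)) \<and> (\<forall>i x. pd i F differentiable (at x))"

lemma gi_sym: "gi x i j = gi x j i" by (simp add: gi_def mult.commute)

lemma Gam_sym: "Gam F G x = Gam G F x"
  unfolding Gam_def
  by (subst sum.swap) (simp add: gi_sym mult_ac)

lemma Gam_alt: "Gam F G x = (\<Sum>i\<in>UNIV. pd i F x * pd i G x)
   + (\<Sum>i\<in>UNIV. complex_of_real (x$i) * pd i F x) * (\<Sum>j\<in>UNIV. complex_of_real (x$j) * pd j G x)"
proof -
  have "Gam F G x = (\<Sum>i\<in>UNIV. \<Sum>j\<in>UNIV. (if i = j then pd i F x * pd j G x else 0)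
      + (complex_of_real (x$i) * pd i F x) * (complex_of_real (x$j) * pd j G x))"
    unfolding Gam_def gi_def by (intro sum.cong refl) (simp add: algebra_simps)
  also have "\<dots> = (\<Sum>i\<in>UNIV. pd i F x * pd i G x)
   + (\<Sum>i\<in>UNIV. complex_of_real (x$i) * pd i F x) * (\<Sum>j\<in>UNIV. complex_of_real (x$j) * pd j G x)"
    by (simp add: sum.distrib sum_product)
  finally show ?thesis .
qed

lemma Lap_alt: fixes x :: "real^'k::finite" shows "Lap F x = (\<Sum>i\<in>UNIV. pd i (pd i F) x)
   + (\<Sum>i\<in>UNIV. \<Sum>j\<in>UNIV. complex_of_real (x$i * x$j) * pd j (pd i F) x)
   + of_nat CARD('k::finite) * (\<Sum>i\<in>UNIV. complex_of_real (x$i) * pd i F x)"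
proof -
  have "(\<Sum>i\<in>UNIV. \<Sum>j\<in>UNIV. complex_of_real (gi x i j) * pd j (pd i F) x)
     = (\<Sum>i\<in>UNIV. \<Sum>j\<in>UNIV. (if i = j then pd j (pd i F) x else 0) + complex_of_real (x$i * x$j) * pd j (pd i F) x)"
    unfolding gi_def by (intro sum.cong refl) (simp add: algebra_simps)
  also have "\<dots> = (\<Sum>i\<in>UNIV. pd i (pd i F) x) + (\<Sum>i\<in>UNIV. \<Sum>j\<in>UNIV. complex_of_real (x$i * x$j) * pd j (pd i F) x)"
    by (simp add: sum.distrib)
  finally show ?thesis unfolding Lap_def by simp
qed

lemma C2_diff: "C2 F \<Longrightarrow> F differentiable (at x)" by (simp add: C2_def)
lemma C2_pd_diff: "C2 F \<Longrightarrow> pd i F differentiable (at x)" by (simp add: C2_def)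

lemma pd_mult_fun:
  assumes "C2 A" "C2 B"
  shows "pd i (\<lambda>x. A x * B x) = (\<lambda>x. A x * pd i B x + pd i A x * B x)"
  using pd_mult assms C2_diff by blast

lemma pd_add_fun:
  assumes "C2 A" "C2 B"
  shows "pd i (\<lambda>x. A x + B x) = (\<lambda>x. pd i A x + pd i B x)"
  using pd_add assms C2_diff by blast

lemma C2_mult:
  assumes "C2 A" "C2 B"
  shows "C2 (\<lambda>x. A x * B x)"
  unfolding C2_def pd_mult_fun[OF assms]
  using assms by (auto simp: C2_def)

lemma C2_add:
  assumes "C2 A" "C2 B"
  shows "C2 (\<lambda>x. A x + B x)"
  unfolding C2_def pd_add_fun[OF assms]
  using assms by (auto simp: C2_def)

lemma Gam_add:
  assumes "A differentiable (at x)" "B differentiable (at x)"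
  shows "Gam (\<lambda>x. A x + B x) G x = Gam A G x + Gam B G x"
  unfolding Gam_def pd_add[OF assms]
  by (simp add: algebra_simps sum.distrib)

lemma Gam_mult:
  assumes "A differentiable (at x)" "B differentiable (at x)"
  shows "Gam (\<lambda>x. A x * B x) G x = A x * Gam B G x + B x * Gam A G x"
  unfolding Gam_def pd_mult[OF assms]
  by (simp add: algebra_simps sum.distrib sum_distrib_left)

lemma Gam_chain1:
  fixes T :: "real^'k::finite \<Rightarrow> real" and Q :: "real \<Rightarrow> complex"
  assumes "T differentiable (at x)" "(Q has_vector_derivative q) (at (T x))"
  shows "Gam (\<lambda>x. Q (T x)) G x = q * Gam (\<lambda>x. complex_of_real (T x)) G x"
proof -
  have t: "(T has_derivative frechet_derivative T (at x)) (at x)"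
    using assms frechet_derivative_works by blast
  show ?thesis
    unfolding Gam_def pd_chain1[OF t assms(2)]
    by (simp add: algebra_simps sum_distrib_left)
qed


lemma pd2_mult:
  assumes "C2 A" "C2 B"
  shows "pd j (pd i (\<lambda>x. A x * B x)) x =
     A x * pd j (pd i B) x + pd j A x * pd i B x + pd i A x * pd j B x + pd j (pd i A) x * B x"
proof -
  have "pd j (pd i (\<lambda>x. A x * B x)) x = pd j (\<lambda>x. A x * pd i B x + pd i A x * B x) x"
    by (simp add: pd_mult_fun[OF assms])
  also have "\<dots> = pd j (\<lambda>x. A x * pd i B x) x + pd j (\<lambda>x. pd i A x * B x) x"
    by (rule pd_add) (auto intro!: differentiable_mult C2_diff[OF assms(1)] C2_diff[OF assms(2)] C2_pd_diff[OF assms(1)] C2_pd_diff[OF assms(2)])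
  also have "\<dots> = A x * pd j (pd i B) x + pd j A x * pd i B x + (pd i A x * pd j B x + pd j (pd i A) x * B x)"
    by (subst pd_mult, (auto intro!: C2_diff C2_pd_diff assms)[2])+ simp
  finally show ?thesis by simp
qed

lemma Lap_mult:
  fixes A B :: "real^'k::finite \<Rightarrow> complex"
  assumes "C2 A" "C2 B"
  shows "Lap (\<lambda>x. A x * B x) x = A x * Lap B x + B x * Lap A x + 2 * Gam A B x"
proof -
  let ?g = "\<lambda>i j. complex_of_real (gi x i j)"
  have "(\<Sum>i\<in>UNIV. \<Sum>j\<in>UNIV. ?g i j * pd j (pd i (\<lambda>x. A x * B x)) x)
     = (\<Sum>i\<in>UNIV. \<Sum>j\<in>UNIV. A x * (?g i j * pd j (pd i B) x) + B x * (?g i j * pd j (pd i A) x)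
          + ?g i j * pd i B x * pd j A x + ?g i j * pd i A x * pd j B x)"
    by (intro sum.cong refl) (simp add: pd2_mult[OF assms] algebra_simps)
  also have "\<dots> = A x * (\<Sum>i\<in>UNIV. \<Sum>j\<in>UNIV. ?g i j * pd j (pd i B) x)
     + B x * (\<Sum>i\<in>UNIV. \<Sum>j\<in>UNIV. ?g i j * pd j (pd i A) x) + Gam B A x + Gam A B x"
    by (simp add: sum.distrib sum_distrib_left Gam_def)
  finally have 1: "(\<Sum>i\<in>UNIV. \<Sum>j\<in>UNIV. ?g i j * pd j (pd i (\<lambda>x. A x * B x)) x) =
     A x * (\<Sum>i\<in>UNIV. \<Sum>j\<in>UNIV. ?g i j * pd j (pd i B) x)
     + B x * (\<Sum>i\<in>UNIV. \<Sum>j\<in>UNIV. ?g i j * pd j (pd i A) x) + 2 * Gam A B x"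
    using Gam_sym[of B A x] by simp
  have 2: "(\<Sum>i\<in>UNIV. complex_of_real (x$i) * pd i (\<lambda>x. A x * B x) x)
     = A x * (\<Sum>i\<in>UNIV. complex_of_real (x$i) * pd i B x) + B x * (\<Sum>i\<in>UNIV. complex_of_real (x$i) * pd i A x)"
    by (simp add: pd_mult_fun[OF assms] sum.distrib sum_distrib_left algebra_simps)
  show ?thesis unfolding Lap_def 1 2 by (simp add: algebra_simps)
qed

lemma Lap_add:
  fixes A B :: "real^'k::finite \<Rightarrow> complex"
  assumes "C2 A" "C2 B"
  shows "Lap (\<lambda>x. A x + B x) x = Lap A x + Lap B x"
proof -
  have p: "pd j (\<lambda>x. pd i A x + pd i B x) x = pd j (pd i A) x + pd j (pd i B) x" for i j
    by (rule pd_add) (auto intro!: C2_pd_diff assms)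
  show ?thesis unfolding Lap_def pd_add_fun[OF assms] p
    by (simp add: algebra_simps sum.distrib)
qed

lemma pd_const_fun: "pd i (\<lambda>x. c) = (\<lambda>x. 0)"
  by (rule ext) (rule pd_const)

lemma C2_const: "C2 (\<lambda>x. c)"
  unfolding C2_def by (simp add: pd_const_fun)

lemma Lap_const: "Lap (\<lambda>x. c) x = 0"
  unfolding Lap_def by (simp add: pd_const_fun pd_const)

lemma Gam_const: "Gam (\<lambda>x. c) G x = 0"
  unfolding Gam_def by (simp add: pd_const)


lemma diff_chain1:
  fixes T :: "real^'k::finite \<Rightarrow> real" and Q :: "real \<Rightarrow> complex"
  assumes "T differentiable (at x)" "(Q has_vector_derivative q) (at (T x))"
  shows "(\<lambda>x. Q (T x)) differentiable (at x)"
proof -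
  have t: "(T has_derivative frechet_derivative T (at x)) (at x)"
    using assms frechet_derivative_works by blast
  show ?thesis
    using has_derivative_compose[OF t assms(2)[unfolded has_vector_derivative_def]]
    unfolding differentiable_def by blast
qed

lemma pd_chain1_fun:
  fixes T :: "real^'k::finite \<Rightarrow> real" and Q :: "real \<Rightarrow> complex"
  assumes "\<And>x. T differentiable (at x)" "\<And>x. (Q has_vector_derivative Q1 (T x)) (at (T x))"
  shows "pd i (\<lambda>x. Q (T x)) = (\<lambda>x. Q1 (T x) * pd i (\<lambda>x. complex_of_real (T x)) x)"
proof
  fix x
  have t: "(T has_derivative frechet_derivative T (at x)) (at x)"
    using assms frechet_derivative_works by blast
  show "pd i (\<lambda>x. Q (T x)) x = Q1 (T x) * pd i (\<lambda>x. complex_of_real (T x)) x"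
    by (rule pd_chain1[OF t assms(2)])
qed

lemma C2_chain1:
  fixes T :: "real^'k::finite \<Rightarrow> real" and Q :: "real \<Rightarrow> complex"
  assumes "\<And>x. T differentiable (at x)" "C2 (\<lambda>x. complex_of_real (T x))"
    "\<And>x. (Q has_vector_derivative Q1 (T x)) (at (T x))"
    "\<And>x. (Q1 has_vector_derivative Q2 (T x)) (at (T x))"
  shows "C2 (\<lambda>x. Q (T x))"
  unfolding C2_def pd_chain1_fun[OF assms(1,3)]
  using diff_chain1[OF assms(1) assms(3)] diff_chain1[OF assms(1) assms(4)] C2_pd_diff[OF assms(2)]
  by (auto intro!: differentiable_mult)

lemma Lap_chain1:
  fixes T :: "real^'k::finite \<Rightarrow> real" and Q :: "real \<Rightarrow> complex"
  assumes "\<And>x. T differentiable (at x)" "C2 (\<lambda>x. complex_of_real (T x))"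
    "\<And>x. (Q has_vector_derivative Q1 (T x)) (at (T x))"
    "\<And>x. (Q1 has_vector_derivative Q2 (T x)) (at (T x))"
  shows "Lap (\<lambda>x. Q (T x)) x = Q2 (T x) * Gam (\<lambda>x. complex_of_real (T x)) (\<lambda>x. complex_of_real (T x)) x
     + Q1 (T x) * Lap (\<lambda>x. complex_of_real (T x)) x"
proof -
  let ?cT = "\<lambda>x. complex_of_real (T x)"
  have t: "(T has_derivative frechet_derivative T (at x)) (at x)"
    using assms frechet_derivative_works by blast
  have p: "pd j (\<lambda>x. Q1 (T x) * pd i ?cT x) x = Q1 (T x) * pd j (pd i ?cT) x + Q2 (T x) * pd j ?cT x * pd i ?cT x" for i j
  proof -
    have "pd j (\<lambda>x. Q1 (T x) * pd i ?cT x) x = Q1 (T x) * pd j (pd i ?cT) x + pd j (\<lambda>x. Q1 (T x)) x * pd i ?cT x"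
      by (rule pd_mult) (auto intro: diff_chain1 assms C2_pd_diff)
    then show ?thesis using pd_chain1[OF t assms(4)] by simp
  qed
  show ?thesis
    unfolding Lap_def pd_chain1_fun[OF assms(1,3)] p Gam_def
    by (simp add: algebra_simps sum.distrib sum_distrib_left)
qed

lemma pd_chainZ_fun:
  fixes Z :: "real^'k::finite \<Rightarrow> real^'m::finite" and h :: "real^'m \<Rightarrow> complex"
  assumes "\<And>x. Z differentiable (at x)" "\<And>x. h differentiable (at x)"
  shows "pd i (\<lambda>x. h (Z x)) = (\<lambda>x. \<Sum>l\<in>UNIV. pd l h (Z x) * pd i (\<lambda>x. complex_of_real (Z x $ l)) x)"
  using pd_chainZ assms by blast

lemma Gam_chainZ:
  fixes Z :: "real^'k::finite \<Rightarrow> real^'m::finite" and h :: "real^'m \<Rightarrow> complex"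
  assumes "Z differentiable (at x)" "h differentiable (at (Z x))"
  shows "Gam F (\<lambda>x. h (Z x)) x = (\<Sum>l\<in>UNIV. pd l h (Z x) * Gam F (\<lambda>x. complex_of_real (Z x $ l)) x)"
proof -
  have "Gam F (\<lambda>x. h (Z x)) x = (\<Sum>i\<in>UNIV. \<Sum>j\<in>UNIV. \<Sum>l\<in>UNIV. pd l h (Z x) *
      (complex_of_real (gi x i j) * pd i F x * pd j (\<lambda>x. complex_of_real (Z x $ l)) x))"
    unfolding Gam_def pd_chainZ[OF assms] by (simp add: sum_distrib_left algebra_simps)
  also have "\<dots> = (\<Sum>l\<in>UNIV. pd l h (Z x) * Gam F (\<lambda>x. complex_of_real (Z x $ l)) x)"
    unfolding Gam_def sum_distrib_left
    by (subst (2) sum.swap, subst sum.swap, simp)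
  finally show ?thesis .
qed


lemma swap3: "(\<Sum>i\<in>A. \<Sum>j\<in>B. \<Sum>l\<in>C. f i j l) = (\<Sum>l\<in>C. \<Sum>i\<in>A. \<Sum>j\<in>B. f i j l)"
proof -
  have "(\<Sum>i\<in>A. \<Sum>j\<in>B. \<Sum>l\<in>C. f i j l) = (\<Sum>i\<in>A. \<Sum>l\<in>C. \<Sum>j\<in>B. f i j l)"
    by (rule sum.cong[OF refl]) (rule sum.swap)
  also have "\<dots> = (\<Sum>l\<in>C. \<Sum>i\<in>A. \<Sum>j\<in>B. f i j l)" by (rule sum.swap)
  finally show ?thesis .
qed

lemma swap4: "(\<Sum>i\<in>A. \<Sum>j\<in>B. \<Sum>l\<in>C. \<Sum>m\<in>D. f i j l m) = (\<Sum>l\<in>C. \<Sum>m\<in>D. \<Sum>i\<in>A. \<Sum>j\<in>B. f i j l m)"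
  by (subst swap3, rule sum.cong[OF refl], rule swap3)




lemma diff_comp_at:
  assumes "f differentiable (at x)" "g differentiable (at (f x))"
  shows "(\<lambda>x. g (f x)) differentiable (at x)"
  using differentiable_chain_at[OF assms] by (simp add: o_def)

lemma swap3f: fixes a :: "'c \<Rightarrow> 'r::semiring_0" shows "(\<Sum>i\<in>A. \<Sum>j\<in>B. \<Sum>l\<in>C. a l * f i j l) = (\<Sum>l\<in>C. a l * (\<Sum>i\<in>A. \<Sum>j\<in>B. f i j l))"
  using swap3[where f="\<lambda>i j l. a l * f i j l" and A=A and B=B and C=C] by (simp add: sum_distrib_left)

lemma swap4f: fixes a :: "'c \<Rightarrow> 'd \<Rightarrow> 'r::semiring_0" shows "(\<Sum>i\<in>A. \<Sum>j\<in>B. \<Sum>l\<in>C. \<Sum>m\<in>D. a l m * f i j l m) = (\<Sum>l\<in>C. \<Sum>m\<in>D. a l m * (\<Sum>i\<in>A. \<Sum>j\<in>B. f i j l m))"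
  using swap4[where f="\<lambda>i j l m. a l m * f i j l m" and A=A and B=B and C=C and D=D] by (simp add: sum_distrib_left)

lemma C2_chainZ:
  fixes Z :: "real^'k::finite \<Rightarrow> real^'m::finite" and h :: "real^'m \<Rightarrow> complex"
  assumes "\<And>x. Z differentiable (at x)" "\<And>l. C2 (\<lambda>x. complex_of_real (Z x $ l))"
    "\<And>x. h differentiable (at x)" "\<And>l x. pd l h differentiable (at x)"
  shows "C2 (\<lambda>x. h (Z x))"
proof -
  have dhZ: "\<And>l x. (\<lambda>x. pd l h (Z x)) differentiable (at x)"
    using diff_comp_at[OF assms(1) assms(4)] .
  have dZi: "\<And>l i x. pd i (\<lambda>x. complex_of_real (Z x $ l)) differentiable (at x)"
    using C2_pd_diff[OF assms(2)] .
  show ?thesis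
    unfolding C2_def pd_chainZ_fun[OF assms(1,3)]
  proof (intro conjI allI)
    fix x show "(\<lambda>x. h (Z x)) differentiable at x"
      using diff_comp_at[OF assms(1) assms(3)] .
  next
    fix i x
    show "(\<lambda>x. \<Sum>l\<in>UNIV. pd l h (Z x) * pd i (\<lambda>x. complex_of_real (Z x $ l)) x) differentiable at x"
      by (intro differentiable_sum ballI differentiable_mult dhZ dZi) simp
  qed
qed

lemma Lap_chainZ:
  fixes Z :: "real^'k::finite \<Rightarrow> real^'m::finite" and h :: "real^'m \<Rightarrow> complex"
  assumes "\<And>x. Z differentiable (at x)" "\<And>l. C2 (\<lambda>x. complex_of_real (Z x $ l))"
    "\<And>x. h differentiable (at x)" "\<And>l x. pd l h differentiable (at x)"
  shows "Lap (\<lambda>x. h (Z x)) x = (\<Sum>l\<in>UNIV. pd l h (Z x) * Lap (\<lambda>x. complex_of_real (Z x $ l)) x)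
     + (\<Sum>l\<in>UNIV. \<Sum>m\<in>UNIV. pd m (pd l h) (Z x) *
         Gam (\<lambda>x. complex_of_real (Z x $ l)) (\<lambda>x. complex_of_real (Z x $ m)) x)"
proof -
  let ?Z = "\<lambda>l x. complex_of_real (Z x $ l)"
  let ?g = "\<lambda>i j. complex_of_real (gi x i j)"
  have dhZ: "\<And>l x. (\<lambda>x. pd l h (Z x)) differentiable (at x)"
    using diff_comp_at[OF assms(1) assms(4)] .
  have dZi: "\<And>l i x. pd i (?Z l) differentiable (at x)"
    using C2_pd_diff[OF assms(2)] .
  have p: "pd j (\<lambda>x. \<Sum>l\<in>UNIV. pd l h (Z x) * pd i (?Z l) x) x =
     (\<Sum>l\<in>UNIV. pd l h (Z x) * pd j (pd i (?Z l)) x +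
        (\<Sum>m\<in>UNIV. pd m (pd l h) (Z x) * pd j (?Z m) x) * pd i (?Z l) x)" for i j
  proof -
    have "pd j (\<lambda>x. \<Sum>l\<in>UNIV. pd l h (Z x) * pd i (?Z l) x) x =
       (\<Sum>l\<in>UNIV. pd j (\<lambda>x. pd l h (Z x) * pd i (?Z l) x) x)"
      by (rule pd_sum) (auto intro!: differentiable_mult dhZ dZi)
    also have "\<dots> = (\<Sum>l\<in>UNIV. pd l h (Z x) * pd j (pd i (?Z l)) x + pd j (\<lambda>x. pd l h (Z x)) x * pd i (?Z l) x)"
      by (rule sum.cong[OF refl], rule pd_mult[OF dhZ dZi])
    also have "\<dots> = (\<Sum>l\<in>UNIV. pd l h (Z x) * pd j (pd i (?Z l)) x +
        (\<Sum>m\<in>UNIV. pd m (pd l h) (Z x) * pd j (?Z m) x) * pd i (?Z l) x)"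
      using pd_chainZ[OF assms(1) assms(4)] by simp
    finally show ?thesis .
  qed
  have A: "?g i j * (\<Sum>l\<in>UNIV. pd l h (Z x) * pd j (pd i (?Z l)) x +
        (\<Sum>m\<in>UNIV. pd m (pd l h) (Z x) * pd j (?Z m) x) * pd i (?Z l) x)
     = (\<Sum>l\<in>UNIV. pd l h (Z x) * (?g i j * pd j (pd i (?Z l)) x))
     + (\<Sum>l\<in>UNIV. \<Sum>m\<in>UNIV. pd m (pd l h) (Z x) * (?g i j * pd i (?Z l) x * pd j (?Z m) x))" for i j
    by (simp add: sum_distrib_left sum_distrib_right sum.distrib distrib_left mult_ac)
  have B: "(\<Sum>i\<in>UNIV. complex_of_real (x$i) * (\<Sum>l\<in>UNIV. pd l h (Z x) * pd i (?Z l) x))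
     = (\<Sum>l\<in>UNIV. pd l h (Z x) * (\<Sum>i\<in>UNIV. complex_of_real (x$i) * pd i (?Z l) x))"
    by (simp add: sum_distrib_left mult_ac) (rule sum.swap)
  have "Lap (\<lambda>x. h (Z x)) x = 
     (\<Sum>i\<in>UNIV. \<Sum>j\<in>UNIV. (\<Sum>l\<in>UNIV. pd l h (Z x) * (?g i j * pd j (pd i (?Z l)) x))
     + (\<Sum>l\<in>UNIV. \<Sum>m\<in>UNIV. pd m (pd l h) (Z x) * (?g i j * pd i (?Z l) x * pd j (?Z m) x)))
     + of_nat CARD('k) * (\<Sum>l\<in>UNIV. pd l h (Z x) * (\<Sum>i\<in>UNIV. complex_of_real (x$i) * pd i (?Z l) x))"
    unfolding Lap_def[of "\<lambda>x. h (Z x)"] pd_chainZ_fun[OF assms(1,3)] p A B ..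
  also have "\<dots> = (\<Sum>l\<in>UNIV. pd l h (Z x) * (\<Sum>i\<in>UNIV. \<Sum>j\<in>UNIV. ?g i j * pd j (pd i (?Z l)) x))
     + (\<Sum>l\<in>UNIV. \<Sum>m\<in>UNIV. pd m (pd l h) (Z x) * (\<Sum>i\<in>UNIV. \<Sum>j\<in>UNIV. ?g i j * pd i (?Z l) x * pd j (?Z m) x))
     + of_nat CARD('k) * (\<Sum>l\<in>UNIV. pd l h (Z x) * (\<Sum>i\<in>UNIV. complex_of_real (x$i) * pd i (?Z l) x))"
    by (simp only: sum.distrib swap3f swap4f)
  also have "\<dots> = (\<Sum>l\<in>UNIV. pd l h (Z x) * Lap (?Z l) x)
     + (\<Sum>l\<in>UNIV. \<Sum>m\<in>UNIV. pd m (pd l h) (Z x) * Gam (?Z l) (?Z m) x)"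
    unfolding Lap_def Gam_def by (simp add: sum.distrib distrib_left sum_distrib_left mult_ac)
  finally show ?thesis .
qed



definition nrm2 :: "real^'k::finite \<Rightarrow> real" where "nrm2 x = (\<Sum>i\<in>UNIV. (x$i)^2)"
definition rho :: "real^'k::finite \<Rightarrow> real" where "rho x = sqrt (1 + nrm2 x)"

lemma nrm2_ge0: "nrm2 x \<ge> 0" unfolding nrm2_def by (simp add: sum_nonneg)
lemma rho_pos: "rho x > 0" using nrm2_ge0[of x] by (simp add: rho_def)
lemma rho_sq: "(rho x)^2 = 1 + nrm2 x" using nrm2_ge0[of x] by (simp add: rho_def)

lemma sum_axis: "(\<Sum>k\<in>UNIV. x$k * (axis j (1::real)) $ k) = x$j"
proof -
  have "(\<Sum>k\<in>UNIV. x$k * (axis j (1::real)) $ k) = (\<Sum>k\<in>UNIV. if k = j then x$k else 0)"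
    by (rule sum.cong) (auto simp: axis_def)
  then show ?thesis by simp
qed

lemma hasd_nth_gen:
  "(f has_derivative f') F \<Longrightarrow> ((\<lambda>x. f x $ i) has_derivative (\<lambda>v. f' v $ i)) F"
  by (rule bounded_linear.has_derivative[OF bounded_linear_vec_nth])

lemma hasd_nth: "((\<lambda>x::real^'k::finite. x$a) has_derivative (\<lambda>v. v$a)) (at x)"
  by (rule bounded_linear_imp_has_derivative) (rule bounded_linear_vec_nth)

lemma pd_Xc: "pd i (\<lambda>x::real^'k::finite. complex_of_real (x$a)) x = (if i = a then 1 else 0)"
  using pd_real[OF hasd_nth, of i a x] by (auto simp: axis_def)

lemma pd_Xc_fun: "pd i (\<lambda>x::real^'k::finite. complex_of_real (x$a)) = (\<lambda>x. if i = a then 1 else 0)"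
  by (rule ext) (rule pd_Xc)

lemma hasd_Xc: "((\<lambda>x::real^'k::finite. complex_of_real (x$a)) has_derivative (\<lambda>v. complex_of_real (v$a))) (at x)"
  by (rule has_derivative_compose[OF hasd_nth bounded_linear_imp_has_derivative[OF bounded_linear_of_real]])

lemma C2_Xc: "C2 (\<lambda>x::real^'k::finite. complex_of_real (x$a))"
  unfolding C2_def pd_Xc_fun differentiable_def
  using hasd_Xc has_derivative_const by blast

lemma nrm2_inner: "nrm2 x = x \<bullet> x"
  by (simp add: nrm2_def inner_vec_def power2_eq_square)

lemma hasd_rho: fixes x :: "real^'k::finite" shows "(rho has_derivative (\<lambda>v. (\<Sum>i\<in>UNIV. x$i * v$i) / rho x)) (at x)"
proof -
  have a: "((\<lambda>x::real^'k. 1 + x \<bullet> x) has_derivative (\<lambda>v. v \<bullet> x + x \<bullet> v)) (at x)"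
    by (auto intro!: derivative_eq_intros)
  have pos: "1 + x \<bullet> x > 0" by (simp add: add_pos_nonneg)
  have b: "(sqrt has_derivative (*) (inverse (sqrt (1 + x \<bullet> x)) / 2)) (at (1 + x \<bullet> x))"
    using DERIV_real_sqrt[OF pos] unfolding has_field_derivative_def .
  have c: "((\<lambda>x::real^'k. sqrt (1 + x \<bullet> x)) has_derivative
      (\<lambda>v. inverse (sqrt (1 + x \<bullet> x)) / 2 * (v \<bullet> x + x \<bullet> v))) (at x)"
    using has_derivative_compose[OF a b] .
  have e: "inverse (sqrt (1 + x \<bullet> x)) / 2 * (v \<bullet> x + x \<bullet> v) = (\<Sum>i\<in>UNIV. x$i * v$i) / rho x" for v
  proof -
    have 1: "x \<bullet> v = (\<Sum>i\<in>UNIV. x$i * v$i)" by (simp add: inner_vec_def)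
    have 2: "v \<bullet> x = x \<bullet> v" by (rule inner_commute)
    show ?thesis unfolding 2 1 by (simp add: rho_def nrm2_inner field_simps)
  qed
  have rf: "rho = (\<lambda>x::real^'k. sqrt (1 + x \<bullet> x))" by (rule ext) (simp add: rho_def nrm2_inner)
  show ?thesis using c unfolding e unfolding rf .
qed


lemma pd_rho: "pd i (\<lambda>x::real^'k::finite. complex_of_real (rho x)) x = complex_of_real (x$i / rho x)"
  using pd_real[OF hasd_rho, of i x] sum_axis[of x i] by simp

lemma pd_rho_fun: "pd i (\<lambda>x::real^'k::finite. complex_of_real (rho x)) = (\<lambda>x. complex_of_real (x$i / rho x))"
  by (rule ext) (rule pd_rho)

lemma hasd_q: fixes x :: "real^'k::finite"
  shows "((\<lambda>x. x$i / rho x) has_derivative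
    (\<lambda>v. v$i / rho x - x$i * (inverse (rho x) * (\<Sum>k\<in>UNIV. x$k * v$k) * inverse (rho x)) / rho x)) (at x)"
  using has_derivative_divide[OF hasd_nth[where a=i and x=x] hasd_rho[of x]] rho_pos[of x] by simp

lemma pd2_rho: "pd j (pd i (\<lambda>x::real^'k::finite. complex_of_real (rho x))) x =
   complex_of_real ((if i = j then 1 else 0) / rho x - x$i * x$j / (rho x)^3)"
proof -
  have "pd j (pd i (\<lambda>x::real^'k::finite. complex_of_real (rho x))) x =
     complex_of_real ((axis j 1)$i / rho x - x$i * (inverse (rho x) * (\<Sum>k\<in>UNIV. x$k * (axis j 1)$k) * inverse (rho x)) / rho x)"
    unfolding pd_rho_fun by (rule pd_real[OF hasd_q])
  also have "\<dots> = complex_of_real ((if i = j then 1 else 0) / rho x - x$i * x$j / (rho x)^3)"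
    unfolding sum_axis by (simp add: axis_def field_simps power3_eq_cube)
  finally show ?thesis .
qed

lemma C2_rho: "C2 (\<lambda>x::real^'k::finite. complex_of_real (rho x))"
proof -
  have d: "((\<lambda>x. complex_of_real (R x)) differentiable (at x))" if "(R has_derivative R') (at x)" for R R' and x :: "real^'k"
    using has_derivative_compose[OF that bounded_linear_imp_has_derivative[OF bounded_linear_of_real]]
    unfolding differentiable_def by blast
  show ?thesis unfolding C2_def pd_rho_fun using d hasd_rho hasd_q by blast
qed

lemma rho_diff: "rho differentiable (at x)"
  using hasd_rho differentiable_def by blast

lemma sum_delta_r: fixes b :: "'j::finite" shows "(\<Sum>j\<in>UNIV. f j * (if j = b then 1 else 0)) = (f b :: 'a::comm_ring_1)"
proof -
  have "(\<Sum>j\<in>UNIV. f j * (if j = b then 1 else 0)) = (\<Sum>j\<in>UNIV. if j = b then f j else 0)"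
    by (intro sum.cong refl) auto
  then show ?thesis by simp
qed

lemma sum_if_const: "(\<Sum>j\<in>A. if P then f j else 0) = (if P then (\<Sum>j\<in>A. f j) else 0)"
  by (cases P) auto

lemma Gam_Xc: "Gam (\<lambda>x::real^'k::finite. complex_of_real (x$a)) (\<lambda>x. complex_of_real (x$b)) x = complex_of_real (gi x a b)"
proof -
  have "Gam (\<lambda>x::real^'k::finite. complex_of_real (x$a)) (\<lambda>x. complex_of_real (x$b)) x =
    (\<Sum>i\<in>UNIV. if i = a then (\<Sum>j\<in>UNIV. if j = b then complex_of_real (gi x i j) else 0) else 0)"
  proof -
    have e: "\<And>i j. complex_of_real (gi x i j) * (if i = a then 1 else 0) * (if j = b then 1 else 0) = (if i = a then (if j = b then complex_of_real (gi x i j) else 0) else 0)"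
      by simp
    show ?thesis unfolding Gam_def pd_Xc e sum_if_const ..
  qed
  then show ?thesis by simp
qed

lemma Lap_Xc: "Lap (\<lambda>x::real^'k::finite. complex_of_real (x$a)) x = of_nat CARD('k) * complex_of_real (x$a)"
proof -
  have "(\<Sum>i\<in>UNIV. complex_of_real (x$i) * pd i (\<lambda>x. complex_of_real (x$a)) x) =
     (\<Sum>i\<in>UNIV. if i = a then complex_of_real (x$i) else 0)"
    unfolding pd_Xc by (intro sum.cong refl) auto
  then show ?thesis unfolding Lap_def pd_Xc_fun pd_const by simp
qed

lemma Gam_rho_Xc: "Gam (\<lambda>x::real^'k::finite. complex_of_real (rho x)) (\<lambda>x. complex_of_real (x$a)) x = complex_of_real (x$a * rho x)"
proof -
  have "Gam (\<lambda>x::real^'k::finite. complex_of_real (rho x)) (\<lambda>x. complex_of_real (x$a)) x =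
     complex_of_real (x$a / rho x + (nrm2 x / rho x) * x$a)"
    unfolding Gam_alt pd_rho pd_Xc
    by (simp add: if_distrib nrm2_def power2_eq_square sum_divide_distrib cong: if_cong)
  also have "x$a / rho x + (nrm2 x / rho x) * x$a = x$a * rho x"
  proof -
    have "x$a / rho x + (nrm2 x / rho x) * x$a = x$a * (1 + nrm2 x) / rho x" by (simp add: algebra_simps add_divide_distrib)
    also have "\<dots> = x$a * rho x" unfolding rho_sq[symmetric] using rho_pos[of x] by (simp add: power2_eq_square)
    finally show ?thesis .
  qed
  finally show ?thesis .
qed

lemma Gam_rho_rho: "Gam (\<lambda>x::real^'k::finite. complex_of_real (rho x)) (\<lambda>x. complex_of_real (rho x)) x = complex_of_real (nrm2 x)"
proof -
  have "Gam (\<lambda>x::real^'k::finite. complex_of_real (rho x)) (\<lambda>x. complex_of_real (rho x)) x =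
     complex_of_real (nrm2 x / (rho x)^2 + (nrm2 x / rho x) * (nrm2 x / rho x))"
    unfolding Gam_alt pd_rho
    by (simp add: nrm2_def power2_eq_square sum_divide_distrib)
  also have "nrm2 x / (rho x)^2 + (nrm2 x / rho x) * (nrm2 x / rho x) = nrm2 x"
  proof -
    have "nrm2 x / (rho x)^2 + (nrm2 x / rho x) * (nrm2 x / rho x) = nrm2 x * (1 + nrm2 x) / (rho x)^2"
      by (simp add: algebra_simps add_divide_distrib power2_eq_square)
    also have "\<dots> = nrm2 x" unfolding rho_sq[symmetric] using rho_pos[of x] by simp
    finally show ?thesis .
  qed
  finally show ?thesis .
qed


lemma Lap_rho: "Lap (\<lambda>x::real^'k::finite. complex_of_real (rho x)) x = of_nat CARD('k) * complex_of_real (rho x)"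
proof -
  let ?n = "real CARD('k)"
  let ?r = "rho x" and ?S = "nrm2 x"
  have s1: "(\<Sum>i\<in>UNIV. (if i = i then 1 else 0) / ?r - x$i * x$i / ?r^3) = ?n / ?r - ?S / ?r^3"
    by (simp add: sum_subtractf sum_divide_distrib[symmetric] nrm2_def power2_eq_square)
  have s2: "(\<Sum>i\<in>UNIV. \<Sum>j\<in>UNIV. (x$i * x$j) * ((if i = j then 1 else 0) / ?r - x$i * x$j / ?r^3))
      = ?S / ?r - ?S * ?S / ?r^3"
  proof -
    have e: "(\<Sum>j\<in>UNIV. (x$i * x$j) * ((if i = j then 1 else 0) / ?r - x$i * x$j / ?r^3))
       = x$i * x$i / ?r - (\<Sum>j\<in>UNIV. (x$i * x$i) * (x$j * x$j) / ?r^3)" for i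
    proof -
      have "(\<Sum>j\<in>UNIV. (x$i * x$j) * ((if i = j then 1 else 0) / ?r - x$i * x$j / ?r^3))
         = (\<Sum>j\<in>UNIV. (if j = i then x$i * x$i / ?r else 0) - (x$i * x$i) * (x$j * x$j) / ?r^3)"
        by (rule sum.cong) (auto simp: algebra_simps)
      then show ?thesis by (simp add: sum_subtractf)
    qed
    have "(\<Sum>i\<in>UNIV. \<Sum>j\<in>UNIV. (x$i * x$j) * ((if i = j then 1 else 0) / ?r - x$i * x$j / ?r^3))
      = (\<Sum>i\<in>UNIV. x$i * x$i / ?r) - (\<Sum>i\<in>UNIV. \<Sum>j\<in>UNIV. (x$i * x$i) * (x$j * x$j) / ?r^3)"
      unfolding e by (simp add: sum_subtractf)
    also have "\<dots> = ?S / ?r - ?S * ?S / ?r^3"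
      by (simp add: nrm2_def power2_eq_square sum_divide_distrib[symmetric] sum_product)
    finally show ?thesis .
  qed
  have s3: "(\<Sum>i\<in>UNIV. x$i * (x$i / ?r)) = ?S / ?r"
    by (simp add: nrm2_def power2_eq_square sum_divide_distrib[symmetric])
  have L: "Lap (\<lambda>x::real^'k::finite. complex_of_real (rho x)) x = complex_of_real (
      (\<Sum>i\<in>UNIV. (if i = i then 1 else 0) / ?r - x$i * x$i / ?r^3)
    + (\<Sum>i\<in>UNIV. \<Sum>j\<in>UNIV. (x$i * x$j) * ((if i = j then 1 else 0) / ?r - x$i * x$j / ?r^3))
    + ?n * (\<Sum>i\<in>UNIV. x$i * (x$i / ?r)))"
    unfolding Lap_alt pd2_rho pd_rho by simp
  have R: "(?n / ?r - ?S / ?r^3) + (?S / ?r - ?S * ?S / ?r^3) + ?n * (?S / ?r) = ?n * ?r"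
  proof -
    have "(?n / ?r - ?S / ?r^3) + (?S / ?r - ?S * ?S / ?r^3) + ?n * (?S / ?r)
        = ?n * (1 + ?S) / ?r + ?S / ?r - ?S * (1 + ?S) / ?r^3"
      by (simp add: algebra_simps add_divide_distrib diff_divide_distrib)
    also have "\<dots> = ?n * ?r" unfolding rho_sq[symmetric] using rho_pos[of x]
      by (simp add: power2_eq_square power3_eq_cube)
    finally show ?thesis .
  qed
  show ?thesis unfolding L s1 s2 s3 R by simp
qed



definition Uf :: "'k \<Rightarrow> real^'k::finite \<Rightarrow> real" where "Uf N x = rho x + x$N"
definition Tf :: "'k \<Rightarrow> real^'k::finite \<Rightarrow> real" where "Tf N x = 2 / Uf N x"

lemma Uf_pos: "Uf N x > 0"
proof -
  have "(x$N)^2 \<le> nrm2 x" unfolding nrm2_def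
    by (rule member_le_sum[of N UNIV "\<lambda>i. (x$i)^2"]) auto
  then have "\<bar>x$N\<bar>^2 < 1 + nrm2 x" by simp
  then have "\<bar>x$N\<bar> < rho x" unfolding rho_def by (rule real_less_rsqrt)
  then show ?thesis unfolding Uf_def by linarith
qed

lemma Tf_pos: "Tf N x > 0" using Uf_pos[of N x] by (simp add: Tf_def)

lemma Uf_c: "(\<lambda>x. complex_of_real (Uf N x)) = (\<lambda>x. complex_of_real (rho x) + complex_of_real (x$N))"
  by (simp add: Uf_def)

lemma C2_U: "C2 (\<lambda>x. complex_of_real (Uf N x))"
  unfolding Uf_c by (rule C2_add[OF C2_rho C2_Xc])

lemma Uf_diff: "Uf N differentiable (at x)"
proof -
  have "(\<lambda>x. x$N) differentiable (at x)" using hasd_nth differentiable_def by blast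
  then have "(\<lambda>x. rho x + x$N) differentiable (at x)"
    using rho_diff by (rule differentiable_add[rotated])
  then show ?thesis by (simp add: Uf_def[abs_def])
qed

lemma Gam_add_r:
  assumes "A differentiable (at x)" "B differentiable (at x)"
  shows "Gam F (\<lambda>x. A x + B x) x = Gam F A x + Gam F B x"
  using Gam_add[OF assms, of F] Gam_sym by metis

lemma Xc_diff: "(\<lambda>x::real^'k::finite. complex_of_real (x$a)) differentiable (at x)"
  using C2_Xc C2_diff by blast
lemma rhoc_diff: "(\<lambda>x::real^'k::finite. complex_of_real (rho x)) differentiable (at x)"
  using C2_rho C2_diff by blast

lemma Gam_U_U: "Gam (\<lambda>x. complex_of_real (Uf N x)) (\<lambda>x. complex_of_real (Uf N x)) x = complex_of_real ((Uf N x)^2)"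
proof -
  have "Gam (\<lambda>x. complex_of_real (Uf N x)) (\<lambda>x. complex_of_real (Uf N x)) x =
    complex_of_real (nrm2 x + x$N * rho x + x$N * rho x + gi x N N)"
    unfolding Uf_c
    by (simp add: Gam_add[OF rhoc_diff Xc_diff] Gam_add_r[OF rhoc_diff Xc_diff] Gam_rho_rho Gam_rho_Xc Gam_Xc
        Gam_sym[of "\<lambda>x. complex_of_real (x$N)" "\<lambda>x. complex_of_real (rho x)"])
  also have "nrm2 x + x$N * rho x + x$N * rho x + gi x N N = (Uf N x)^2"
    using rho_sq[of x] by (simp add: gi_def Uf_def power2_eq_square algebra_simps)
  finally show ?thesis .
qed

lemma Gam_U_X: "a \<noteq> N \<Longrightarrow> Gam (\<lambda>x. complex_of_real (Uf N x)) (\<lambda>x. complex_of_real (x$a)) x = complex_of_real (x$a * Uf N x)"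
  unfolding Uf_c
  by (simp add: Gam_add[OF rhoc_diff Xc_diff] Gam_rho_Xc Gam_Xc gi_def Uf_def algebra_simps)

lemma Lap_U: fixes x :: "real^'k::finite" shows "Lap (\<lambda>x. complex_of_real (Uf N x)) x = of_nat CARD('k::finite) * complex_of_real (Uf N x)"
  unfolding Uf_c
  by (simp add: Lap_add[OF C2_rho C2_Xc] Lap_rho Lap_Xc Uf_def algebra_simps)


definition Qi :: "real \<Rightarrow> complex" where "Qi s = complex_of_real (2 / s)"
definition Qi1 :: "real \<Rightarrow> complex" where "Qi1 s = complex_of_real (- 2 / s^2)"
definition Qi2 :: "real \<Rightarrow> complex" where "Qi2 s = complex_of_real (4 / s^3)"

lemma hv_Qi: "s \<noteq> 0 \<Longrightarrow> (Qi has_vector_derivative Qi1 s) (at s)"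
proof -
  assume s: "s \<noteq> 0"
  have "((\<lambda>s. 2 / s) has_field_derivative (- 2 / s^2)) (at s)"
    using s by (auto intro!: derivative_eq_intros simp: power2_eq_square field_simps)
  from has_vector_derivative_of_real[OF this] show ?thesis
    unfolding Qi_def[abs_def] Qi1_def .
qed

lemma hv_Qi1: "s \<noteq> 0 \<Longrightarrow> (Qi1 has_vector_derivative Qi2 s) (at s)"
proof -
  assume s: "s \<noteq> 0"
  have "((\<lambda>s. - 2 / s^2) has_field_derivative (4 / s^3)) (at s)"
    using s by (auto intro!: derivative_eq_intros simp: power2_eq_square power3_eq_cube field_simps)
  from has_vector_derivative_of_real[OF this] show ?thesis
    unfolding Qi1_def[abs_def] Qi2_def .
qed

lemma Tc_eq: "(\<lambda>x. complex_of_real (Tf N x)) = (\<lambda>x. Qi (Uf N x))"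
  by (simp add: Tf_def Qi_def)

lemma Uf_ne: "Uf N x \<noteq> 0" using Uf_pos[of N x] by simp

lemma C2_T: "C2 (\<lambda>x. complex_of_real (Tf N x))"
  unfolding Tc_eq
  by (rule C2_chain1[OF Uf_diff C2_U hv_Qi[OF Uf_ne] hv_Qi1[OF Uf_ne]])

lemma Tf_diff: "Tf N differentiable (at x)"
proof -
  have "(\<lambda>x. 2 / Uf N x) differentiable (at x)"
    using Uf_diff Uf_ne by (auto intro!: differentiable_divide)
  then show ?thesis by (simp add: Tf_def[abs_def])
qed

lemma Gam_T: "Gam (\<lambda>x. complex_of_real (Tf N x)) G x = Qi1 (Uf N x) * Gam (\<lambda>x. complex_of_real (Uf N x)) G x"
  unfolding Tc_eq by (rule Gam_chain1[OF Uf_diff hv_Qi[OF Uf_ne]])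

lemma Tc_diff: "(\<lambda>x. complex_of_real (Tf N x)) differentiable (at x)"
  using C2_T C2_diff by blast
lemma Uc_diff: "(\<lambda>x. complex_of_real (Uf N x)) differentiable (at x)"
  using C2_U C2_diff by blast

lemma Gam_T_T: "Gam (\<lambda>x. complex_of_real (Tf N x)) (\<lambda>x. complex_of_real (Tf N x)) x = complex_of_real ((Tf N x)^2)"
proof -
  have "Gam (\<lambda>x. complex_of_real (Tf N x)) (\<lambda>x. complex_of_real (Tf N x)) x
     = Qi1 (Uf N x) * Qi1 (Uf N x) * Gam (\<lambda>x. complex_of_real (Uf N x)) (\<lambda>x. complex_of_real (Uf N x)) x"
    using Gam_T[of N "\<lambda>x. complex_of_real (Tf N x)" x] Gam_sym[of "\<lambda>x. complex_of_real (Uf N x)" "\<lambda>x. complex_of_real (Tf N x)" x]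
      Gam_T[of N "\<lambda>x. complex_of_real (Uf N x)" x] by simp
  also have "\<dots> = complex_of_real ((Tf N x)^2)"
    unfolding Gam_U_U Qi1_def using Uf_ne[of N x]
    by (simp add: Tf_def field_simps power2_eq_square flip: of_real_mult)
  finally show ?thesis .
qed

lemma Gam_T_X: assumes "a \<noteq> N" shows "Gam (\<lambda>x. complex_of_real (Tf N x)) (\<lambda>x. complex_of_real (x$a)) x = complex_of_real (- (x$a * Tf N x))"
proof -
  have r: "- 2 / (Uf N x)^2 * (x$a * Uf N x) = - (x$a * Tf N x)" using Uf_ne[of N x]
    by (simp add: Tf_def field_simps power2_eq_square)
  show ?thesis unfolding Gam_T Gam_U_X[OF assms] Qi1_def of_real_mult[symmetric] r ..
qed

lemma Lap_T: fixes x :: "real^'k::finite"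
  shows "Lap (\<lambda>x. complex_of_real (Tf N x)) x = complex_of_real ((2 - real CARD('k)) * Tf N x)"
proof -
  have "Lap (\<lambda>x. complex_of_real (Tf N x)) x = Qi2 (Uf N x) * complex_of_real ((Uf N x)^2) + Qi1 (Uf N x) * (of_nat CARD('k) * complex_of_real (Uf N x))"
    unfolding Tc_eq Lap_chain1[OF Uf_diff C2_U hv_Qi[OF Uf_ne] hv_Qi1[OF Uf_ne]] Gam_U_U Lap_U ..
  also have "\<dots> = complex_of_real (4 / (Uf N x)^3 * (Uf N x)^2 + - 2 / (Uf N x)^2 * (real CARD('k) * Uf N x))"
    unfolding Qi1_def Qi2_def by simp
  also have "4 / (Uf N x)^3 * (Uf N x)^2 + - 2 / (Uf N x)^2 * (real CARD('k) * Uf N x) = (2 - real CARD('k)) * Tf N x"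
    using Uf_ne[of N x] by (simp add: Tf_def field_simps power2_eq_square power3_eq_cube)
  finally show ?thesis .
qed


lemma Gam_mult_r:
  assumes "A differentiable (at x)" "B differentiable (at x)"
  shows "Gam G (\<lambda>x. A x * B x) x = A x * Gam G B x + B x * Gam G A x"
  using Gam_mult[OF assms, of G] Gam_sym by metis

lemma Zc_eq: "(\<lambda>x. complex_of_real (Tf N x * x$a)) = (\<lambda>x. complex_of_real (Tf N x) * complex_of_real (x$a))"
  by simp

lemma C2_Z: "C2 (\<lambda>x. complex_of_real (Tf N x * x$a))"
  unfolding Zc_eq by (rule C2_mult[OF C2_T C2_Xc])

lemma Gam_T_Z: assumes "a \<noteq> N"
  shows "Gam (\<lambda>x. complex_of_real (Tf N x)) (\<lambda>x. complex_of_real (Tf N x * x$a)) x = 0"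
  unfolding Zc_eq Gam_mult_r[OF Tc_diff Xc_diff] Gam_T_X[OF assms] Gam_T_T
  by (simp add: power2_eq_square)

lemma Gam_Z_Z: assumes "a \<noteq> N" "b \<noteq> N"
  shows "Gam (\<lambda>x. complex_of_real (Tf N x * x$a)) (\<lambda>x. complex_of_real (Tf N x * x$b)) x
    = complex_of_real (if a = b then (Tf N x)^2 else 0)"
proof -
  have "Gam (\<lambda>x. complex_of_real (Tf N x * x$a)) (\<lambda>x. complex_of_real (Tf N x * x$b)) x
     = complex_of_real (Tf N x) * (complex_of_real (Tf N x) * complex_of_real (gi x a b) + complex_of_real (x$b) * complex_of_real (- (x$a * Tf N x)))
     + complex_of_real (x$a) * (complex_of_real (Tf N x) * complex_of_real (- (x$b * Tf N x)) + complex_of_real (x$b) * complex_of_real ((Tf N x)^2))"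
    unfolding Zc_eq Gam_mult[OF Tc_diff Xc_diff] Gam_mult_r[OF Tc_diff Xc_diff]
      Gam_sym[of "\<lambda>x. complex_of_real (x$a)" "\<lambda>x. complex_of_real (Tf N x)"]
      Gam_T_X[OF assms(1)] Gam_T_X[OF assms(2)] Gam_T_T Gam_Xc ..
  also have "\<dots> = complex_of_real (Tf N x * (Tf N x * gi x a b + x$b * (- (x$a * Tf N x))) + x$a * (Tf N x * (- (x$b * Tf N x)) + x$b * (Tf N x)^2))"
    by simp
  also have "Tf N x * (Tf N x * gi x a b + x$b * (- (x$a * Tf N x))) + x$a * (Tf N x * (- (x$b * Tf N x)) + x$b * (Tf N x)^2)
     = (if a = b then (Tf N x)^2 else 0)"
    by (simp add: gi_def power2_eq_square algebra_simps)
  finally show ?thesis .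
qed

lemma Lap_Z: fixes x :: "real^'k::finite" assumes "a \<noteq> N"
  shows "Lap (\<lambda>x. complex_of_real (Tf N x * x$a)) x = 0"
proof -
  have "Lap (\<lambda>x. complex_of_real (Tf N x * x$a)) x =
    complex_of_real (Tf N x) * (of_nat CARD('k) * complex_of_real (x$a)) + complex_of_real (x$a) * complex_of_real ((2 - real CARD('k)) * Tf N x)
    + 2 * complex_of_real (- (x$a * Tf N x))"
    unfolding Zc_eq Lap_mult[OF C2_T C2_Xc] Lap_Xc Lap_T Gam_T_X[OF assms] ..
  also have "\<dots> = complex_of_real (Tf N x * (real CARD('k) * x$a) + x$a * ((2 - real CARD('k)) * Tf N x) + 2 * (- (x$a * Tf N x)))"
    by simp
  also have "Tf N x * (real CARD('k) * x$a) + x$a * ((2 - real CARD('k)) * Tf N x) + 2 * (- (x$a * Tf N x)) = 0"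
    by (simp add: algebra_simps)
  finally show ?thesis by simp
qed



definition Zv :: "real^('m::finite option) \<Rightarrow> real^'m" where
  "Zv x = (\<chi> l. Tf None x * x$(Some l))"

lemma Zv_nth: "Zv x $ l = Tf None x * x$(Some l)" by (simp add: Zv_def)

lemma Zv_diff: fixes x :: "real^('m::finite option)" shows "Zv differentiable (at x)"
proof -
  have "linear (\<lambda>x::real^('m option). (\<chi> l. x$(Some l)) :: real^'m)"
    by (auto simp: linear_iff vec_eq_iff)
  then have bl: "bounded_linear (\<lambda>x::real^('m option). (\<chi> l. x$(Some l)) :: real^'m)"
    by (simp add: linear_conv_bounded_linear)
  have "(\<lambda>x. Tf None x *\<^sub>R ((\<chi> l. x$(Some l)) :: real^'m)) differentiable (at x)"
    by (intro differentiable_scaleR Tf_diff bounded_linear_imp_differentiable[OF bl])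
  moreover have "(\<lambda>x. Tf None x *\<^sub>R ((\<chi> l. x$(Some l)) :: real^'m)) = Zv"
    by (rule ext) (simp add: Zv_def vec_eq_iff)
  ultimately show ?thesis by simp
qed

lemma C2_Zv: "C2 (\<lambda>x. complex_of_real (Zv x $ l))"
  unfolding Zv_nth by (rule C2_Z)

lemma Lap_FQ:
  fixes h :: "real^'m::finite \<Rightarrow> complex" and Q Q1 Q2 :: "real \<Rightarrow> complex"
    and x :: "real^('m option)"
  assumes harm: "euclid_harmonic h"
    and Q1: "\<And>s. s > 0 \<Longrightarrow> (Q has_vector_derivative Q1 s) (at s)"
    and Q2: "\<And>s. s > 0 \<Longrightarrow> (Q1 has_vector_derivative Q2 s) (at s)"
  shows "Lap (\<lambda>x. Q (Tf None x) * h (Zv x)) x =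
    (Q2 (Tf None x) * complex_of_real ((Tf None x)^2)
      + Q1 (Tf None x) * complex_of_real ((2 - real CARD('m option)) * Tf None x)) * h (Zv x)"
proof -
  let ?A = "\<lambda>x. Q (Tf None x)" and ?B = "\<lambda>x. h (Zv x)"
  have hd: "\<And>x. h differentiable (at x)" and hpd: "\<And>l x. pd l h differentiable (at x)"
    and hL: "\<And>x. (\<Sum>i\<in>UNIV. pd i (pd i h) x) = 0"
    using harm unfolding euclid_harmonic_def by auto
  have q1: "\<And>x. (Q has_vector_derivative Q1 (Tf None x)) (at (Tf None x))" using Q1 Tf_pos by blast
  have q2: "\<And>x. (Q1 has_vector_derivative Q2 (Tf None x)) (at (Tf None x))" using Q2 Tf_pos by blast
  have CA: "C2 ?A" by (rule C2_chain1[OF Tf_diff C2_T q1 q2])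
  have CB: "C2 ?B" by (rule C2_chainZ[OF Zv_diff C2_Zv hd hpd])
  have LA: "Lap ?A x = Q2 (Tf None x) * complex_of_real ((Tf None x)^2)
      + Q1 (Tf None x) * complex_of_real ((2 - real CARD('m option)) * Tf None x)"
    unfolding Lap_chain1[OF Tf_diff C2_T q1 q2] Gam_T_T Lap_T ..
  have LB: "Lap ?B x = 0"
  proof -
    have lz: "\<And>l. Lap (\<lambda>x. complex_of_real (Tf None x * x$Some l)) x = 0" by (rule Lap_Z) simp
    have gz: "\<And>l m. Gam (\<lambda>x. complex_of_real (Tf None x * x$Some l)) (\<lambda>x. complex_of_real (Tf None x * x$Some m)) x
       = complex_of_real (if Some l = Some m then (Tf None x)^2 else 0)" by (rule Gam_Z_Z) simp_all
    have "Lap ?B x = (\<Sum>l\<in>UNIV. pd l h (Zv x) * 0)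
       + (\<Sum>l\<in>UNIV. \<Sum>m\<in>UNIV. pd m (pd l h) (Zv x) * complex_of_real (if l = m then (Tf None x)^2 else 0))"
      unfolding Lap_chainZ[OF Zv_diff C2_Zv hd hpd] Zv_nth lz gz by simp
    also have "\<dots> = complex_of_real ((Tf None x)^2) * (\<Sum>l\<in>UNIV. pd l (pd l h) (Zv x))"
      by (simp add: sum_distrib_left if_distrib mult.commute cong: if_cong)
    finally show ?thesis using hL by simp
  qed
  have GAB: "Gam ?A ?B x = 0"
  proof -
    have "Gam ?A ?B x = Q1 (Tf None x) * Gam (\<lambda>x. complex_of_real (Tf None x)) ?B x"
      by (rule Gam_chain1[OF Tf_diff q1])
    also have "Gam (\<lambda>x. complex_of_real (Tf None x)) ?B x = 0"
    proof -
      have gt: "\<And>l. Gam (\<lambda>x. complex_of_real (Tf None x)) (\<lambda>x. complex_of_real (Tf None x * x$Some l)) x = 0"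
        by (rule Gam_T_Z) simp
      show ?thesis unfolding Gam_chainZ[OF Zv_diff hd] Zv_nth gt by simp
    qed
    finally show ?thesis by simp
  qed
  show ?thesis unfolding Lap_mult[OF CA CB] LA LB GAB by (simp add: mult.commute)
qed



lemma Mi_entry:
  fixes A :: "real^'n::finite^'n" and x :: "real^'n"
  assumes orth: "transpose A ** A = mat 1"
  shows "(transpose A ** (\<chi> i j. (if i = j then 1 else 0) + x$i * x$j) ** A) $ i $ j
     = (if i = j then 1 else 0) + (transpose A *v x)$i * (transpose A *v x)$j"
proof -
  have e1: "(\<Sum>k\<in>UNIV. A$k$i * A$k$j) = (if i = j then 1 else 0)"
    using arg_cong[OF orth, of "\<lambda>M. M$i$j"]
    by (simp add: matrix_matrix_mult_def transpose_def mat_def)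
  have "(transpose A ** (\<chi> i j. (if i = j then 1 else 0) + x$i * x$j) ** A) $ i $ j
     = (\<Sum>l\<in>UNIV. (\<Sum>k\<in>UNIV. A$k$i * ((if k = l then 1 else 0) + x$k * x$l)) * A$l$j)"
    by (simp add: matrix_matrix_mult_def transpose_def)
  also have "\<dots> = (\<Sum>l\<in>UNIV. (A$l$i + (\<Sum>k\<in>UNIV. A$k$i * x$k) * x$l) * A$l$j)"
  proof (rule sum.cong[OF refl])
    fix l
    have "(\<Sum>k\<in>UNIV. A$k$i * ((if k = l then 1 else 0) + x$k * x$l)) =
       (\<Sum>k\<in>UNIV. (if k = l then A$k$i else 0)) + (\<Sum>k\<in>UNIV. A$k$i * x$k) * x$l"
      by (simp add: algebra_simps sum.distrib sum_distrib_left sum_distrib_right if_distrib[of "\<lambda>t. A$_$i * t"] cong: if_cong)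
    then show "(\<Sum>k\<in>UNIV. A$k$i * ((if k = l then 1 else 0) + x$k * x$l)) * A$l$j =
       (A$l$i + (\<Sum>k\<in>UNIV. A$k$i * x$k) * x$l) * A$l$j" by simp
  qed
  also have "\<dots> = (\<Sum>l\<in>UNIV. A$l$i * A$l$j) + (\<Sum>k\<in>UNIV. A$k$i * x$k) * (\<Sum>l\<in>UNIV. x$l * A$l$j)"
    by (simp add: algebra_simps sum.distrib sum_distrib_left)
  also have "\<dots> = (if i = j then 1 else 0) + (transpose A *v x)$i * (transpose A *v x)$j"
    unfolding e1 by (simp add: matrix_vector_mult_def transpose_def mult.commute)
  finally show ?thesis .
qed


lemma det_Mi:
  fixes x :: "real^'n::finite"
  shows "det (\<chi> i j. (if i = j then 1 else 0) + x$i * x$j) = 1 + x \<bullet> x"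
proof (cases "x = 0")
  case True
  then have "(\<chi> i j. (if i = j then 1 else 0) + x$i * x$j) = (mat 1 :: real^'n^'n)"
    by (simp add: mat_def vec_eq_iff)
  then show ?thesis using True by simp
next
  case False
  obtain k :: 'n where True by simp
  let ?u = "x /\<^sub>R norm x"
  have nu: "norm ?u = 1" using False by simp
  obtain A where orth: "orthogonal_matrix A" and Ae: "A *v axis k 1 = ?u"
    using orthogonal_matrix_exists_basis[OF nu] by metis
  have o1: "transpose A ** A = mat 1" and o2: "A ** transpose A = mat 1"
    using orth unfolding orthogonal_matrix_def by auto
  let ?M = "(\<chi> i j. (if i = j then 1 else 0) + x$i * x$j) :: real^'n^'n"
  let ?w = "transpose A *v x"
  have "transpose A *v ?u = axis k 1"
    using Ae o1 by (metis matrix_vector_mul_assoc matrix_vector_mul_lid)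
  moreover have "x = norm x *\<^sub>R ?u" using False by simp
  ultimately have w: "?w = norm x *\<^sub>R axis k 1"
    by (metis matrix_vector_mult_scaleR)
  have B: "transpose A ** ?M ** A = (\<chi> i j. (if i = j then 1 else 0) + ?w$i * ?w$j)"
    using Mi_entry[OF o1] by (simp add: vec_eq_iff)
  have dB: "det (transpose A ** ?M ** A) = 1 + x \<bullet> x"
  proof -
    have "det (transpose A ** ?M ** A) = (\<Prod>i\<in>UNIV. (\<chi> i j. (if i = j then 1 else 0) + ?w$i * ?w$j) $ i $ i)"
      unfolding B w by (rule det_diagonal) (auto simp: axis_def)
    also have "\<dots> = (\<Prod>i\<in>UNIV. if i = k then 1 + (norm x)^2 else 1)"
      unfolding w by (intro prod.cong refl) (simp add: axis_def power2_eq_square)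
    also have "\<dots> = 1 + x \<bullet> x" by (simp add: power2_norm_eq_inner)
    finally show ?thesis .
  qed
  have dA: "det A * det A = 1"
    using arg_cong[OF o1, of det] by (simp add: det_mul)
  have "det (transpose A ** ?M ** A) = det ?M * (det A * det A)"
    by (simp add: det_mul)
  then show ?thesis using dB dA by simp
qed


lemma hchart_eq: "hchart = (\<lambda>x::real^'k::finite. (rho x, x))"
  by (rule ext) (simp add: hchart_def rho_def nrm2_def)

lemma hasd_hchart: fixes x :: "real^'k::finite"
  shows "(hchart has_derivative (\<lambda>v. ((\<Sum>i\<in>UNIV. x$i * v$i) / rho x, v))) (at x)"
  unfolding hchart_eq by (rule has_derivative_Pair[OF hasd_rho has_derivative_ident])

lemma pdv_hchart: "pdv i hchart (x::real^'k::finite) = (x$i / rho x, axis i 1)"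
  using pdv_hasd[OF hasd_hchart, of i x] sum_axis[of x i] by simp

lemma sum_axis2: "(\<Sum>k\<in>UNIV. (axis i (1::real))$k * (axis j 1)$k) = (if i = j then 1 else 0)"
  using sum_axis[of "axis i 1" j] by (simp add: axis_def)

definition Gm :: "real^'k::finite \<Rightarrow> real^'k^'k" where
  "Gm x = (\<chi> i j. (if i = j then 1 else 0) - x$i * x$j / (rho x)^2)"
definition Mi :: "real^'k::finite \<Rightarrow> real^'k^'k" where
  "Mi x = (\<chi> i j. (if i = j then 1 else 0) + x$i * x$j)"

lemma hmetric_eq: "hmetric x = Gm x"
  unfolding hmetric_def Gm_def pdv_hchart mink_def
  by (simp add: vec_eq_iff sum_axis2 power2_eq_square)

lemma Gm_Mi: "Gm x ** Mi x = mat 1"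
proof -
  let ?r = "rho x" and ?S = "nrm2 x"
  have "(Gm x ** Mi x) $ i $ j = (if i = j then 1 else 0)" for i j
  proof -
    have "(Gm x ** Mi x) $ i $ j = (\<Sum>k\<in>UNIV. ((if i = k then 1 else 0) - x$i * x$k / ?r^2) * ((if k = j then 1 else 0) + x$k * x$j))"
      by (simp add: Gm_def Mi_def matrix_matrix_mult_def)
    also have "\<dots> = (\<Sum>k\<in>UNIV. (if k = i then (if i = j then 1 else 0) + x$i * x$j else 0)
       - (if k = j then x$i * x$j / ?r^2 else 0) - x$i * x$j / ?r^2 * (x$k * x$k))"
      by (rule sum.cong[OF refl]) (auto simp: algebra_simps add_divide_distrib)
    also have "\<dots> = (if i = j then 1 else 0) + x$i * x$j - x$i * x$j / ?r^2 - x$i * x$j / ?r^2 * ?S"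
      by (simp add: sum_subtractf sum_distrib_left[symmetric] nrm2_def power2_eq_square del: times_divide_eq_left)
    also have "\<dots> = (if i = j then 1 else 0) + x$i * x$j - x$i * x$j * (1 + ?S) / ?r^2"
      by (simp add: algebra_simps add_divide_distrib)
    also have "\<dots> = (if i = j then 1 else 0)"
      unfolding rho_sq[symmetric] using rho_pos[of x] by simp
    finally show ?thesis .
  qed
  then show ?thesis by (simp add: vec_eq_iff mat_def)
qed

lemma Mi_Gm: "Mi x ** Gm x = mat 1"
  by (rule matrix_left_right_inverse1[OF Gm_Mi])

lemma matrix_inv_eq:
  fixes A B :: "real^'n::finite^'n"
  assumes "A ** B = mat 1" "B ** A = mat 1"
  shows "matrix_inv A = B"
  unfolding matrix_inv_def
proof (rule someI2[of _ B])
  show "A ** B = mat 1 \<and> B ** A = mat 1" using assms by simp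
next
  fix A' assume "A ** A' = mat 1 \<and> A' ** A = mat 1"
  then have "A' = A' ** (A ** B)" "A' ** A = mat 1" using assms by auto
  then show "A' = B" by (metis matrix_mul_assoc matrix_mul_lid)
qed

lemma det_Gm: "det (Gm x) = 1 / (rho x)^2"
proof -
  have "det (Gm x) * det (Mi x) = 1" using arg_cong[OF Gm_Mi[of x], of det] by (simp add: det_mul)
  moreover have "det (Mi x) = (rho x)^2"
    unfolding Mi_def det_Mi rho_sq nrm2_inner ..
  ultimately show ?thesis using rho_pos[of x] by (simp add: field_simps)
qed

lemma coef_eq: "matrix_inv (hmetric z) $ i $ j * sqrt \<bar>det (hmetric z)\<bar> = gi z i j / rho z"
proof -
  have "sqrt \<bar>det (hmetric z)\<bar> = 1 / rho z"
    unfolding hmetric_eq det_Gm using rho_pos[of z] by (simp add: real_sqrt_divide)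
  then show ?thesis
    unfolding hmetric_eq matrix_inv_eq[OF Gm_Mi Mi_Gm] by (simp add: Mi_def gi_def)
qed


lemma hasd_gi: fixes z :: "real^'k::finite"
  shows "((\<lambda>z. gi z i j) has_derivative (\<lambda>h. z$i * h$j + h$i * z$j)) (at z)"
proof -
  have "((\<lambda>z. (if i = j then 1 else 0) + z$i * z$j) has_derivative (\<lambda>h. 0 + (z$i * h$j + h$i * z$j))) (at z)"
    by (intro has_derivative_add has_derivative_const has_derivative_mult hasd_nth)
  then show ?thesis by (simp add: gi_def[abs_def])
qed

lemma hasd_c: fixes z :: "real^'k::finite"
  shows "((\<lambda>z. gi z i j / rho z) has_derivative
     (\<lambda>h. ((z$i * h$j + h$i * z$j) * rho z - gi z i j * (\<Sum>k\<in>UNIV. z$k * h$k) / rho z) / (rho z * rho z))) (at z)"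
  using has_derivative_divide'[OF hasd_gi[where z=z and i=i and j=j] hasd_rho[of z]] rho_pos[of z] by simp

lemma sum_d: fixes x :: "real^'k::finite"
  shows "(\<Sum>j\<in>UNIV. rho x * (((x$i * (axis j 1)$j + (axis j 1)$i * x$j) * rho x - gi x i j * (x$j / rho x)) / (rho x * rho x)))
    = real CARD('k) * x$i"
proof -
  let ?r = "rho x" and ?S = "nrm2 x"
  have "(\<Sum>j\<in>UNIV. ?r * (((x$i * (axis j 1)$j + (axis j 1)$i * x$j) * ?r - gi x i j * (x$j / ?r)) / (?r * ?r)))
     = (\<Sum>j\<in>UNIV. x$i + (if j = i then x$i else 0) - (if j = i then x$i else 0) / ?r^2
         - x$i * (x$j * x$j) / ?r^2)"
    using rho_pos[of x]
    by (intro sum.cong refl) (auto simp: axis_def gi_def field_simps power2_eq_square)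
  also have "\<dots> = real CARD('k) * x$i + x$i - (x$i + x$i * ?S) / ?r^2"
  proof -
    have "(\<Sum>j\<in>UNIV. x$i * (x$j * x$j) / ?r^2) = x$i * ?S / ?r^2"
      by (simp add: sum_divide_distrib[symmetric] sum_distrib_left[symmetric] nrm2_def power2_eq_square)
    moreover have "(\<Sum>j\<in>UNIV. (if j = i then x$i else 0) / ?r^2) = x$i / ?r^2"
      by (simp add: sum_divide_distrib[symmetric])
    ultimately show ?thesis
      by (simp add: sum_subtractf sum.distrib add_divide_distrib)
  qed
  also have "\<dots> = real CARD('k) * x$i"
  proof -
    have "x$i + x$i * ?S = x$i * ?r^2" using rho_sq[of x] by (simp add: algebra_simps)
    then show ?thesis using rho_pos[of x] by simp
  qed
  finally show ?thesis .
qed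


lemma lb_Lap:
  fixes F :: "real^'k::finite \<Rightarrow> complex"
  assumes pdF: "\<And>i. pd i F differentiable (at x)"
  shows "lb_coord hmetric F x = Lap F x"
proof -
  let ?r = "rho x"
  define d where "d i j = ((x$i * (axis j 1)$j + (axis j 1)$i * x$j) * rho x - gi x i j * (\<Sum>k\<in>UNIV. x$k * (axis j 1)$k) / rho x) / (rho x * rho x)" for i j
  have cf: "(\<lambda>z. complex_of_real (matrix_inv (hmetric z) $ i $ j * sqrt \<bar>det (hmetric z)\<bar>) * pd i F z)
      = (\<lambda>z. complex_of_real (gi z i j / rho z) * pd i F z)" for i j
    by (simp add: coef_eq)
  have sq: "1 / sqrt \<bar>det (hmetric x)\<bar> = ?r"
    unfolding hmetric_eq det_Gm using rho_pos[of x] by (simp add: real_sqrt_divide)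
  have cd: "(\<lambda>z. complex_of_real (gi z i j / rho z)) differentiable (at x)" for i j
    using has_derivative_compose[OF hasd_c bounded_linear_imp_has_derivative[OF bounded_linear_of_real]]
    unfolding differentiable_def by blast
  have pc: "pd j (\<lambda>z. complex_of_real (gi z i j / rho z)) x = complex_of_real (d i j)" for i j
    unfolding d_def by (rule pd_real[OF hasd_c])
  have T: "complex_of_real ?r * pd j (\<lambda>z. complex_of_real (gi z i j / rho z) * pd i F z) x
     = complex_of_real (gi x i j) * pd j (pd i F) x + complex_of_real (?r * d i j) * pd i F x" for i j
    unfolding pd_mult[OF cd pdF] pc using rho_pos[of x] by (simp add: algebra_simps)
  have D: "(\<Sum>j\<in>UNIV. ?r * d i j) = real CARD('k) * x$i" for i
    unfolding d_def sum_axis using sum_d[of x i] by (simp add: field_simps)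
  have "lb_coord hmetric F x = (\<Sum>i\<in>UNIV. \<Sum>j\<in>UNIV.
     complex_of_real (gi x i j) * pd j (pd i F) x + complex_of_real (?r * d i j) * pd i F x)"
    unfolding lb_coord_def cf sq T ..
  also have "\<dots> = (\<Sum>i\<in>UNIV. \<Sum>j\<in>UNIV. complex_of_real (gi x i j) * pd j (pd i F) x)
      + (\<Sum>i\<in>UNIV. complex_of_real (\<Sum>j\<in>UNIV. ?r * d i j) * pd i F x)"
    by (simp add: sum.distrib sum_distrib_right)
  also have "\<dots> = Lap F x"
    unfolding D Lap_def by (simp add: sum_distrib_left mult_ac)
  finally show ?thesis .
qed



definition opP :: "complex \<Rightarrow> complex poly \<Rightarrow> complex poly" where
  "opP e A = pderiv (pderiv A + smult e A)"

lemma degree_opP_inner: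
  fixes A :: "complex poly"
  assumes "e \<noteq> 0" shows "degree (pderiv A + smult e A) = degree A"
proof (cases "degree A = 0")
  case True
  then have "pderiv A = 0" by (simp add: pderiv_eq_0_iff)
  then show ?thesis using assms by simp
next
  case False
  then have "degree (pderiv A) < degree (smult e A)" using assms by (simp add: degree_pderiv)
  then show ?thesis using assms by (simp add: degree_add_eq_right)
qed

lemma degree_opP: "e \<noteq> 0 \<Longrightarrow> degree (opP e A) = degree A - 1"
  unfolding opP_def by (simp add: degree_pderiv degree_opP_inner)

lemma opP_eq_0: "e \<noteq> 0 \<Longrightarrow> opP e A = 0 \<longleftrightarrow> degree A = 0"
  unfolding opP_def by (simp add: pderiv_eq_0_iff degree_opP_inner)

lemma opP_0: "opP e 0 = 0" by (simp add: opP_def)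

lemma opP_iter_degree: "e \<noteq> 0 \<Longrightarrow> degree ((opP e ^^ j) A) = degree A - j"
  by (induction j) (simp_all add: degree_opP)

lemma opP_iter_last:
  assumes "e \<noteq> 0"
  shows "(opP e ^^ Suc (degree A)) A = 0"
  using opP_iter_degree[OF assms, of "degree A" A] opP_eq_0[OF assms] by simp

lemma opP_iter_ne0:
  assumes "e \<noteq> 0" "A \<noteq> 0"
  shows "j \<le> degree A \<Longrightarrow> (opP e ^^ j) A \<noteq> 0"
proof (induction j)
  case 0 then show ?case using assms by simp
next
  case (Suc j)
  then have "degree ((opP e ^^ j) A) \<noteq> 0" using opP_iter_degree[OF assms(1)] by simp
  then show ?case using opP_eq_0[OF assms(1)] by simp
qed

lemma opP_iter_zero: "(opP e ^^ j) 0 = 0"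
  by (induction j) (simp_all add: opP_0)

lemma opP_monom_last:
  assumes "e \<noteq> 0"
  shows "(opP e ^^ Suc m) (monom a m) = 0"
proof (cases "a = 0")
  case True then show ?thesis using opP_iter_zero[of "Suc m" e] by simp
next
  case False
  then show ?thesis using opP_iter_last[OF assms, of "monom a m"] by (simp add: degree_monom_eq)
qed

lemma opP_monom_const:
  assumes "e \<noteq> 0"
  obtains \<alpha> where "(opP e ^^ m) (monom a m) = [:\<alpha>:]" "\<alpha> = 0 \<longleftrightarrow> a = 0"
proof (cases "a = 0")
  case True
  then show ?thesis using that[of 0] by (simp add: opP_iter_zero)
next
  case False
  let ?P = "(opP e ^^ m) (monom a m)"
  have d: "degree ?P = 0" using opP_iter_degree[OF assms, of m "monom a m"] False by (simp add: degree_monom_eq)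
  have nz: "?P \<noteq> 0" using opP_iter_ne0[OF assms, of "monom a m" m] False by (simp add: degree_monom_eq)
  have "?P = [:coeff ?P 0:]" using degree_0_id[OF d] by simp
  moreover have "coeff ?P 0 \<noteq> 0" using d nz by (metis calculation pCons_0_0)
  ultimately show ?thesis using that[of "coeff ?P 0"] False by simp
qed


definition qf :: "nat \<Rightarrow> complex poly \<Rightarrow> complex poly \<Rightarrow> real \<Rightarrow> complex" where
  "qf c A B s = poly A (complex_of_real s) + complex_of_real (exp (real c * s)) * poly B (complex_of_real s)"

lemma hv_poly: "((\<lambda>s. poly A (complex_of_real s)) has_vector_derivative poly (pderiv A) (complex_of_real s)) (at s)"
  by (rule has_vector_derivative_real_field) (rule poly_DERIV)

lemma hv_qf: "(qf c A B has_vector_derivative qf c (pderiv A) (pderiv B + smult (of_nat c) B) s) (at s)"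
proof -
  have e: "((\<lambda>s. complex_of_real (exp (real c * s))) has_vector_derivative complex_of_real (exp (real c * s) * real c)) (at s)"
    by (rule has_vector_derivative_of_real) (auto intro!: derivative_eq_intros)
  have "((\<lambda>s. poly A (complex_of_real s) + complex_of_real (exp (real c * s)) * poly B (complex_of_real s)) has_vector_derivative
     poly (pderiv A) (complex_of_real s) + (complex_of_real (exp (real c * s)) * poly (pderiv B) (complex_of_real s)
       + complex_of_real (exp (real c * s) * real c) * poly B (complex_of_real s))) (at s)"
    by (intro has_vector_derivative_add has_vector_derivative_mult hv_poly e)
  then show ?thesis unfolding qf_def[abs_def] by (simp add: algebra_simps)
qed

lemma hv_comp_ln:
  assumes "\<And>s. (q has_vector_derivative q1 s) (at s)" "t > 0"
  shows "((\<lambda>t. q (ln t)) has_vector_derivative q1 (ln t) * complex_of_real (1 / t)) (at t)"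
proof -
  have l: "(ln has_vector_derivative (1 / t)) (at t)"
    using assms(2) by (auto intro!: derivative_eq_intros simp: has_real_derivative_iff_has_vector_derivative[symmetric])
  from vector_diff_chain_at[OF l assms(1)] show ?thesis
    by (simp add: o_def scaleR_conv_of_real mult.commute)
qed


lemma hv_inv: "t > 0 \<Longrightarrow> ((\<lambda>t. complex_of_real (1 / t)) has_vector_derivative complex_of_real (- 1 / t^2)) (at t)"
  by (rule has_vector_derivative_of_real) (auto intro!: derivative_eq_intros simp: power2_eq_square field_simps)

definition Lop :: "nat \<Rightarrow> complex poly \<times> complex poly \<Rightarrow> complex poly \<times> complex poly" where
  "Lop c P = (opP (- of_nat c) (fst P), opP (of_nat c) (snd P))"

lemma qf_lin: "qf c A B s - z * qf c A' B' s = qf c (A - smult z A') (B - smult z B') s"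
  by (simp add: qf_def algebra_simps)

lemma Lap_qf:
  fixes h :: "real^'m::finite \<Rightarrow> complex" and x :: "real^('m option)"
  assumes harm: "euclid_harmonic h" and c: "c = CARD('m option) - 1"
  shows "Lap (\<lambda>x. qf c A B (ln (Tf None x)) * h (Zv x)) x
     = qf c (fst (Lop c (A, B))) (snd (Lop c (A, B))) (ln (Tf None x)) * h (Zv x)"
proof -
  define A1 where "A1 = pderiv A"
  define B1 where "B1 = pderiv B + smult (of_nat c) B"
  define A2 where "A2 = pderiv A1"
  define B2 where "B2 = pderiv B1 + smult (of_nat c) B1"
  define Q where "Q t = qf c A B (ln t)" for t
  define Q1 where "Q1 t = qf c A1 B1 (ln t) * complex_of_real (1 / t)" for t
  define Q2 where "Q2 t = qf c A1 B1 (ln t) * complex_of_real (- 1 / t^2)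
       + qf c A2 B2 (ln t) * complex_of_real (1 / t) * complex_of_real (1 / t)" for t
  have d1: "(Q has_vector_derivative Q1 s) (at s)" if "s > 0" for s
    unfolding Q_def[abs_def] Q1_def A1_def B1_def by (rule hv_comp_ln[OF hv_qf that])
  have d2: "(Q1 has_vector_derivative Q2 s) (at s)" if "s > 0" for s
  proof -
    have "((\<lambda>t. qf c A1 B1 (ln t)) has_vector_derivative qf c A2 B2 (ln s) * complex_of_real (1 / s)) (at s)"
      unfolding A2_def B2_def by (rule hv_comp_ln[OF hv_qf that])
    from has_vector_derivative_mult[OF this hv_inv[OF that]] show ?thesis
      unfolding Q1_def[abs_def] Q2_def by (simp add: algebra_simps)
  qed
  let ?T = "Tf None x" let ?L = "ln (Tf None x)"
  have T: "?T > 0" by (rule Tf_pos)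
  have "Lap (\<lambda>x. qf c A B (ln (Tf None x)) * h (Zv x)) x = Lap (\<lambda>x. Q (Tf None x) * h (Zv x)) x"
    by (simp add: Q_def)
  also have "\<dots> = (Q2 ?T * complex_of_real (?T^2) + Q1 ?T * complex_of_real ((2 - real CARD('m option)) * ?T)) * h (Zv x)"
    by (rule Lap_FQ[OF harm d1 d2])
  also have "Q2 ?T * complex_of_real (?T^2) + Q1 ?T * complex_of_real ((2 - real CARD('m option)) * ?T)
     = qf c A2 B2 ?L - of_nat c * qf c A1 B1 ?L"
  proof -
    have r1: "complex_of_real (1 / ?T) * complex_of_real (1 / ?T) * complex_of_real (?T^2) = 1"
      using T by (simp flip: of_real_mult add: power2_eq_square)
    have r2: "complex_of_real (- 1 / ?T^2) * complex_of_real (?T^2) = -1"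
      using T by (simp flip: of_real_mult)
    have r3: "complex_of_real (1 / ?T) * complex_of_real ((2 - real CARD('m option)) * ?T) = 1 - of_nat c"
    proof -
      have "real c = real CARD('m option) - 1" unfolding c by (simp add: of_nat_diff)
      then have "(1 / ?T) * ((2 - real CARD('m option)) * ?T) = 1 - real c" using T by (simp add: field_simps)
      then show ?thesis by (metis of_real_1 of_real_diff of_real_mult of_real_of_nat_eq)
    qed
    have "Q2 ?T * complex_of_real (?T^2) + Q1 ?T * complex_of_real ((2 - real CARD('m option)) * ?T)
      = qf c A1 B1 ?L * (complex_of_real (- 1 / ?T^2) * complex_of_real (?T^2))
      + qf c A2 B2 ?L * (complex_of_real (1 / ?T) * complex_of_real (1 / ?T) * complex_of_real (?T^2))
      + qf c A1 B1 ?L * (complex_of_real (1 / ?T) * complex_of_real ((2 - real CARD('m option)) * ?T))"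
      unfolding Q1_def Q2_def by (simp only: algebra_simps)
    also have "\<dots> = qf c A2 B2 ?L - of_nat c * qf c A1 B1 ?L"
      unfolding r1 r2 r3 by (simp add: algebra_simps)
    finally show ?thesis .
  qed
  also have "qf c A2 B2 ?L - of_nat c * qf c A1 B1 ?L = qf c (fst (Lop c (A, B))) (snd (Lop c (A, B))) ?L"
  proof -
    have "A2 - smult (of_nat c) A1 = opP (- of_nat c) A"
      unfolding A2_def A1_def opP_def by (simp add: pderiv_diff pderiv_smult)
    moreover have "B2 - smult (of_nat c) B1 = opP (of_nat c) B"
      unfolding B2_def opP_def B1_def by simp
    ultimately show ?thesis unfolding qf_lin Lop_def by simp
  qed
  finally show ?thesis .
qed


lemma C2_FQ:
  fixes h :: "real^'m::finite \<Rightarrow> complex" and Q Q1 Q2 :: "real \<Rightarrow> complex"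
  assumes harm: "euclid_harmonic h"
    and Q1: "\<And>s. s > 0 \<Longrightarrow> (Q has_vector_derivative Q1 s) (at s)"
    and Q2: "\<And>s. s > 0 \<Longrightarrow> (Q1 has_vector_derivative Q2 s) (at s)"
  shows "C2 (\<lambda>x::real^('m option). Q (Tf None x) * h (Zv x))"
proof -
  have hd: "\<And>x. h differentiable (at x)" and hpd: "\<And>l x. pd l h differentiable (at x)"
    using harm unfolding euclid_harmonic_def by auto
  have q1: "\<And>x. (Q has_vector_derivative Q1 (Tf None x)) (at (Tf None x))" using Q1 Tf_pos by blast
  have q2: "\<And>x. (Q1 has_vector_derivative Q2 (Tf None x)) (at (Tf None x))" using Q2 Tf_pos by blast
  show ?thesis
    by (rule C2_mult[OF C2_chain1[OF Tf_diff C2_T q1 q2] C2_chainZ[OF Zv_diff C2_Zv hd hpd]])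
qed

lemma C2_qf:
  fixes h :: "real^'m::finite \<Rightarrow> complex"
  assumes harm: "euclid_harmonic h"
  shows "C2 (\<lambda>x::real^('m option). qf c A B (ln (Tf None x)) * h (Zv x))"
proof -
  have d1: "((\<lambda>t. qf c A B (ln t)) has_vector_derivative
     qf c (pderiv A) (pderiv B + smult (of_nat c) B) (ln s) * complex_of_real (1 / s)) (at s)" if "s > 0" for s
    by (rule hv_comp_ln[OF hv_qf that])
  have d2: "((\<lambda>t. qf c (pderiv A) (pderiv B + smult (of_nat c) B) (ln t) * complex_of_real (1 / t)) has_vector_derivative
     qf c (pderiv A) (pderiv B + smult (of_nat c) B) (ln s) * complex_of_real (- 1 / s^2) +
     qf c (pderiv (pderiv A)) (pderiv (pderiv B + smult (of_nat c) B) + smult (of_nat c) (pderiv B + smult (of_nat c) B)) (ln s) * complex_of_real (1 / s) * complex_of_real (1 / s)) (at s)"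
    if "s > 0" for s
    using has_vector_derivative_mult[OF hv_comp_ln[OF hv_qf that] hv_inv[OF that]] by (simp add: algebra_simps)
  show ?thesis by (rule C2_FQ[OF harm d1 d2])
qed

definition Fab :: "nat \<Rightarrow> (real^'m::finite \<Rightarrow> complex) \<Rightarrow> complex poly \<times> complex poly \<Rightarrow> real \<times> (real^('m option)) \<Rightarrow> complex" where
  "Fab c h P y = qf c (fst P) (snd P) (ln (2 / (fst y + snd y $ None))) * h (\<chi> i. 2 * snd y $ Some i / (fst y + snd y $ None))"

lemma hchart_in: "hchart x \<in> hyperboloid"
  unfolding hchart_eq hyperboloid_def using rho_sq[of x] rho_pos[of x] by (simp add: nrm2_def)

lemma Fab_hchart: "Fab c h P (hchart x) = qf c (fst P) (snd P) (ln (Tf None x)) * h (Zv x)"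
proof -
  have "Zv x = (\<chi> i. 2 * x $ Some i / (rho x + x $ None))"
    by (simp add: Zv_def Tf_def Uf_def vec_eq_iff)
  then show ?thesis unfolding Fab_def hchart_eq by (simp add: Tf_def Uf_def)
qed

lemma hyp_hchart: "y \<in> hyperboloid \<Longrightarrow> y = hchart (snd y)"
proof -
  assume "y \<in> hyperboloid"
  then obtain y0 w where y: "y = (y0, w)" "- (y0^2) + (\<Sum>i\<in>UNIV. (w $ i)^2) = -1" "y0 > 0"
    unfolding hyperboloid_def by auto
  then have "y0^2 = 1 + nrm2 w" by (simp add: nrm2_def)
  then have "y0 = rho w" unfolding rho_def using y(3) by (metis abs_of_pos real_sqrt_abs)
  then show ?thesis using y by (simp add: hchart_eq)
qed

lemma tau_step:
  fixes h :: "real^'m::finite \<Rightarrow> complex" and F :: "real \<times> (real^('m option)) \<Rightarrow> complex"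
  assumes harm: "euclid_harmonic h" and c: "c = CARD('m option) - 1"
    and F: "\<And>y. y \<in> hyperboloid \<Longrightarrow> F y = Fab c h P y"
  shows "y \<in> hyperboloid \<Longrightarrow> tau_H F y = Fab c h (Lop c P) y"
proof -
  assume y: "y \<in> hyperboloid"
  obtain A B where P: "P = (A, B)" by (cases P)
  have e: "F \<circ> hchart = (\<lambda>x. qf c A B (ln (Tf None x)) * h (Zv x))"
    by (rule ext) (simp add: F[OF hchart_in] Fab_hchart P)
  have "tau_H F y = lb_coord hmetric (F \<circ> hchart) (snd y)" by (simp add: tau_H_def)
  also have "\<dots> = Lap (\<lambda>x. qf c A B (ln (Tf None x)) * h (Zv x)) (snd y)"
    unfolding e by (rule lb_Lap) (rule C2_pd_diff[OF C2_qf[OF harm]])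
  also have "\<dots> = Fab c h (Lop c P) (hchart (snd y))"
    unfolding Lap_qf[OF harm c] Fab_hchart P ..
  also have "\<dots> = Fab c h (Lop c P) y" using hyp_hchart[OF y] by simp
  finally show ?thesis .
qed


lemma Lop_iter: "(Lop c ^^ j) (A, B) = ((opP (- of_nat c) ^^ j) A, (opP (of_nat c) ^^ j) B)"
  by (induction j) (simp_all add: Lop_def)

lemma tau_iter:
  fixes h :: "real^'m::finite \<Rightarrow> complex" and f :: "real \<times> (real^('m option)) \<Rightarrow> complex"
  assumes harm: "euclid_harmonic h" and c: "c = CARD('m option) - 1"
    and f: "\<And>y. y \<in> hyperboloid \<Longrightarrow> f y = Fab c h P y"
  shows "y \<in> hyperboloid \<Longrightarrow> (tau_H ^^ j) f y = Fab c h ((Lop c ^^ j) P) y"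
proof (induction j arbitrary: y)
  case 0 then show ?case using f by simp
next
  case (Suc j)
  have "(tau_H ^^ Suc j) f y = tau_H ((tau_H ^^ j) f) y" by simp
  also have "\<dots> = Fab c h (Lop c ((Lop c ^^ j) P)) y"
    by (rule tau_step[OF harm c Suc.IH Suc.prems])
  finally show ?case by simp
qed

lemma sum_option: "(\<Sum>i\<in>(UNIV::'m::finite option set). f i) = f None + (\<Sum>l\<in>UNIV. f (Some l))"
proof -
  have "(\<Sum>i\<in>(UNIV::'m option set). f i) = (\<Sum>i\<in>insert None (Some ` UNIV). f i)"
    by (simp add: UNIV_option_conv)
  also have "\<dots> = f None + (\<Sum>i\<in>Some ` UNIV. f i)" by (subst sum.insert) auto
  also have "(\<Sum>i\<in>Some ` UNIV. f i) = (\<Sum>l\<in>UNIV. f (Some l))" by (subst sum.reindex) auto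
  finally show ?thesis .
qed

lemma witness:
  fixes x0 :: "real^'m::finite"
  assumes t0: "t0 > 0"
  shows "\<exists>w::real^('m option). Tf None w = t0 \<and> Zv w = x0"
proof -
  define u where "u = 2 / t0"
  define K where "K = (\<Sum>l\<in>UNIV. (x0 $ l / t0)^2)"
  define wN where "wN = (u^2 - 1 - K) / (2 * u)"
  define w :: "real^('m option)" where "w = (\<chi> i. case i of None \<Rightarrow> wN | Some l \<Rightarrow> x0 $ l / t0)"
  have u: "u > 0" using t0 by (simp add: u_def)
  have K: "K \<ge> 0" unfolding K_def by (simp add: sum_nonneg)
  have n: "nrm2 w = wN^2 + K" unfolding nrm2_def sum_option by (simp add: w_def K_def)
  have pos: "u - wN > 0"
  proof -
    have "u - wN = (u^2 + 1 + K) / (2 * u)" using u by (simp add: wN_def field_simps power2_eq_square)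
    then show ?thesis using u K by (simp add: add_pos_nonneg)
  qed
  have sq: "(u - wN)^2 = 1 + nrm2 w"
    unfolding n using u by (simp add: wN_def field_simps power2_eq_square)
  have r: "rho w = u - wN" unfolding rho_def sq[symmetric] using pos by simp
  have U: "Uf None w = u" unfolding Uf_def r by (simp add: w_def)
  have T: "Tf None w = t0" unfolding Tf_def U u_def using t0 by simp
  have Z: "Zv w = x0" unfolding Zv_def T using t0 by (simp add: w_def vec_eq_iff)
  show ?thesis using T Z by blast
qed


theorem theorem4p3:
  fixes h :: "real^'m::finite \<Rightarrow> complex"
    and r :: nat and a b :: complex
    and p :: "real \<Rightarrow> complex"
    and f :: "real \<times> (real^('m option)) \<Rightarrow> complex"
  assumes harm: "euclid_harmonic h"
    and nonconst: "\<exists>x y. h x \<noteq> h y"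
    and r: "r \<ge> 1"
    and ab: "(a, b) \<noteq> (0, 0)"
    and p_def: "\<And>t. t > 0 \<Longrightarrow>
        p t = (a + b * complex_of_real t ^ (CARD('m option) - 1)) * complex_of_real (ln t) ^ (r - 1)"
    and f_def: "\<And>y0 w. (y0, w) \<in> hyperboloid \<Longrightarrow>
        f (y0, w) = p (2 * sqrt (y0^2 - (\<Sum>i\<in>UNIV. (w $ i)^2)) / (y0 + w $ None)) *
                    h (\<chi> i. 2 * w $ Some i / (y0 + w $ None))"
  shows "proper_r_harmonic_H r f"
proof -
  define c where "c = CARD('m option) - 1"
  have c1: "c \<ge> 1" unfolding c_def by (simp add: card_UNIV_option)
  have cne: "(of_nat c :: complex) \<noteq> 0" "(- of_nat c :: complex) \<noteq> 0" using c1 by auto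
  define P0 where "P0 = (monom a (r - 1), monom b (r - 1))"
  have base: "f y = Fab c h P0 y" if y: "y \<in> hyperboloid" for y :: "real \<times> (real^('m option))"
  proof -
    obtain y0 w where yw: "y = (y0, w)" by (cases y)
    have hc: "y = hchart w" using hyp_hchart[OF y] yw by simp
    then have y0: "y0 = rho w" using yw by (simp add: hchart_eq)
    have s1: "y0^2 - (\<Sum>i\<in>UNIV. (w $ i)^2) = 1" using y0 rho_sq[of w] by (simp add: nrm2_def)
    have tpos: "2 / (y0 + w $ None) > 0" using Tf_pos[of None w] y0 by (simp add: Tf_def Uf_def)
    define t where "t = 2 / (y0 + w $ None)"
    have e: "exp (real c * ln t) = t ^ c" using tpos unfolding t_def
      by (metis exp_ln exp_of_nat_mult of_nat_id)
    have "f y = p t * h (\<chi> i. 2 * w $ Some i / (y0 + w $ None))"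
      using f_def[of y0 w] y yw s1 by (simp add: t_def)
    also have "p t = qf c (monom a (r - 1)) (monom b (r - 1)) (ln t)"
      using p_def[OF tpos[folded t_def]] e unfolding qf_def c_def[symmetric]
      by (simp add: poly_monom algebra_simps flip: of_real_power)
    finally show ?thesis unfolding Fab_def P0_def yw t_def by simp
  qed
  have iter: "\<And>j y. y \<in> hyperboloid \<Longrightarrow> (tau_H ^^ j) f y = Fab c h ((Lop c ^^ j) P0) y"
    by (rule tau_iter[OF harm c_def base])
  have vanish: "\<forall>y\<in>hyperboloid. (tau_H ^^ r) f y = 0"
  proof
    fix y :: "real \<times> (real^('m option))" assume y: "y \<in> hyperboloid"
    have rr: "r = Suc (r - 1)" using r by simp
    have "(Lop c ^^ r) P0 = (0, 0)"
      unfolding P0_def Lop_iter using opP_monom_last[OF cne(2), of "r - 1" a] opP_monom_last[OF cne(1), of "r - 1" b]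
      by (subst (1 2) rr) simp
    then show "(tau_H ^^ r) f y = 0" using iter[OF y] by (simp add: Fab_def qf_def)
  qed
  obtain \<alpha> where al: "(opP (- of_nat c) ^^ (r - 1)) (monom a (r - 1)) = [:\<alpha>:]" "\<alpha> = 0 \<longleftrightarrow> a = 0"
    using opP_monom_const[OF cne(2)] by metis
  obtain \<beta> where be: "(opP (of_nat c) ^^ (r - 1)) (monom b (r - 1)) = [:\<beta>:]" "\<beta> = 0 \<longleftrightarrow> b = 0"
    using opP_monom_const[OF cne(1)] by metis
  obtain x0 where hx0: "h x0 \<noteq> 0" using nonconst by metis
  define t0 :: real where "t0 = (if \<alpha> + \<beta> \<noteq> 0 then 1 else 2)"
  have t0: "t0 > 0" by (simp add: t0_def)
  have val: "\<alpha> + complex_of_real (exp (real c * ln t0)) * \<beta> \<noteq> 0"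
  proof (cases "\<alpha> + \<beta> \<noteq> 0")
    case True then show ?thesis by (simp add: t0_def)
  next
    case False
    have e2: "exp (real c * ln t0) = 2 ^ c" unfolding t0_def using False
      by (simp add: exp_of_nat_mult)
    have "(2::real) ^ c \<ge> 2 ^ 1" by (rule power_increasing[OF c1]) simp
    then have "(2::real) ^ c \<noteq> 1" by simp
    moreover have "(2::complex) ^ c = complex_of_real (2 ^ c)" by simp
    ultimately have "(2::complex) ^ c \<noteq> 1" by (metis of_real_eq_1_iff)
    show ?thesis
    proof
      assume "\<alpha> + complex_of_real (exp (real c * ln t0)) * \<beta> = 0"
      then have "\<alpha> + 2 ^ c * \<beta> = 0" unfolding e2 by simp
      note f2 = this
      have f1: "\<alpha> + \<beta> = 0" using False by simp
      have "(2 ^ c - 1) * \<beta> = (\<alpha> + 2 ^ c * \<beta>) - (\<alpha> + \<beta>)" by (simp add: algebra_simps)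
      also have "\<dots> = 0" by (simp only: f1 f2 diff_zero)
      finally have "(2 ^ c - 1) * \<beta> = 0" .
      then have "\<beta> = 0" using \<open>(2::complex) ^ c \<noteq> 1\<close> by simp
      then have "\<alpha> = 0" using False by simp
      then show False using al be ab \<open>\<beta> = 0\<close> by simp
    qed
  qed
  obtain w :: "real^('m option)" where w: "Tf None w = t0" "Zv w = x0" using witness[OF t0] by blast
  have "(tau_H ^^ (r - 1)) f (hchart w) = Fab c h ((Lop c ^^ (r - 1)) P0) (hchart w)"
    by (rule iter[OF hchart_in])
  also have "\<dots> = (\<alpha> + complex_of_real (exp (real c * ln t0)) * \<beta>) * h x0"
    unfolding P0_def Lop_iter al be Fab_hchart w by (simp add: qf_def)
  finally have "(tau_H ^^ (r - 1)) f (hchart w) \<noteq> 0" using val hx0 by simp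
  then have "\<not> (\<forall>y\<in>hyperboloid. (tau_H ^^ (r - 1)) f y = 0)" using hchart_in by blast
  then show ?thesis unfolding proper_r_harmonic_H_def using vanish by blast
qed


end
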